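(* Let $A$ be a unital pro-$C^*$-algebra, $H$ a Hilbert space, and let $CP^n_\infty(A,L(H),I)$ be the set of completely $n$-positive linear maps $\theta=[\theta_{ij}]_{i,j=1}^n$ from $A$ to $L(H)$ with $\theta_{ii}(1)=I_H$ for $1\le i\le n$ and $\theta_{ij}(1)=0$ for $1\le i<j\le n$. Let $\rho\in CP^n_\infty(A,L(H),I)$ with Stinespring representation $(\Phi_\rho,H_\rho,V_{\rho,1},\dots,V_{\rho,n})$, and let $P_{H_0}$ be the projection of $H_\rho$ onto the closed subspace $H_0$ generated by $\{V_{\rho,i}\xi:\xi\in H,1\le i\le n\}$. Then $\rho$ is an extreme point of $CP^n_\infty(A,L(H),I)$ if and only if the map $T\mapsto P_{H_0}TP_{H_0}$ from $\Phi_\rho(A)'$ to $L(H_\rho)$ is injective.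
   Context: A pro-$C^*$-algebra is a complete Hausdorff topological $*$-algebra over $\mathbb{C}$ whose topology is determined by its continuous $C^*$-seminorms. A representation of $A$ on a Hilbert space $K$ is a continuous $*$-morphism $A\to L(K)$. An $n\times n$ matrix $[\rho_{ij}]$ of continuous linear maps $A\to L(H)$ is completely $n$-positive if the map $M_n(A)\to M_n(L(H))$, $[a_{ij}]\mapsto[\rho_{ij}(a_{ij})]$, is completely positive. The Stinespring representation of $\rho$ consists of a representation $\Phi_\rho$ of $A$ on a Hilbert space $H_\rho$ and $V_{\rho,1},\dots,V_{\rho,n}\in L(H,H_\rho)$ with $\rho_{ij}(a)=V_{\rho,i}^*\Phi_\rho(a)V_{\rho,j}$ for all $a,i,j$ and $\{\Phi_\rho(a)V_{\rho,i}\xi:a\in A,\xi\in H,1\le i\le n\}$ spanning a dense subspace of $H_\rho$; it exists and is unique up to unitary equivalence. $\Phi_\rho(A)'$ is the commutant of $\Phi_\rho(A)$ in $L(H_\rho)$. *)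

theory Defs
  imports "HOL-Analysis.Analysis"
begin

class complex_vector_space = ab_group_add +
  fixes scaleC :: "complex \<Rightarrow> 'a \<Rightarrow> 'a" (infixr "*\<^sub>C" 75)
  assumes scaleC_add_right: "c *\<^sub>C (x + y) = c *\<^sub>C x + c *\<^sub>C y"
    and scaleC_add_left: "(c + d) *\<^sub>C x = c *\<^sub>C x + d *\<^sub>C x"
    and scaleC_scaleC: "c *\<^sub>C (d *\<^sub>C x) = (c * d) *\<^sub>C x"
    and scaleC_one: "1 *\<^sub>C x = x"

class complex_inner = real_normed_vector + complex_vector_space +
  fixes cinner :: "'a \<Rightarrow> 'a \<Rightarrow> complex"
  assumes scaleR_scaleC: "scaleR r x = complex_of_real r *\<^sub>C x"
    and cinner_cnj: "cinner x y = cnj (cinner y x)"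
    and cinner_add_left: "cinner (x + y) z = cinner x z + cinner y z"
    and cinner_scaleC_left: "cinner (c *\<^sub>C x) y = c * cinner x y"
    and cinner_self_real: "Im (cinner x x) = 0"
    and cinner_self_nonneg: "0 \<le> Re (cinner x x)"
    and cinner_self_eq_zero: "cinner x x = 0 \<longleftrightarrow> x = 0"
    and norm_eq_sqrt_cinner: "norm x = sqrt (Re (cinner x x))"

class chilbert_space = complex_inner + complete_space

definition clinear :: "('a::complex_vector_space \<Rightarrow> 'b::complex_vector_space) \<Rightarrow> bool" where
  "clinear f \<longleftrightarrow> (\<forall>x y. f (x + y) = f x + f y) \<and> (\<forall>c x. f (c *\<^sub>C x) = c *\<^sub>C f x)"

definition bounded_clinear :: "('a::complex_inner \<Rightarrow> 'b::complex_inner) \<Rightarrow> bool" where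
  "bounded_clinear f \<longleftrightarrow> clinear f \<and> (\<exists>K. \<forall>x. norm (f x) \<le> norm x * K)"

definition cadjoint :: "('a::complex_inner \<Rightarrow> 'b::complex_inner) \<Rightarrow> ('b \<Rightarrow> 'a)" where
  "cadjoint T = (THE S. \<forall>x y. cinner (T x) y = cinner x (S y))"

definition cspan :: "'a::complex_vector_space set \<Rightarrow> 'a set" where
  "cspan S = {x. \<exists>F c. finite F \<and> F \<subseteq> S \<and> x = (\<Sum>v\<in>F. c v *\<^sub>C v)}"

definition orth_proj :: "'a::complex_inner set \<Rightarrow> 'a \<Rightarrow> 'a" where
  "orth_proj M x = (THE y. y \<in> M \<and> (\<forall>z\<in>M. cinner (x - y) z = 0))"

definition opnorm_topology :: "('a::complex_inner \<Rightarrow> 'b::complex_inner) topology" where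
  "opnorm_topology = subtopology
     (topology_generated_by {{T. onorm (\<lambda>x. T x - T0 x) < r} | T0 r. bounded_clinear T0})
     (Collect bounded_clinear)"

text \<open>Unital complex *-algebras (the unit is 1; 1 = 0 is not excluded).\<close>
class complex_star_algebra = ring + monoid_mult + complex_vector_space +
  fixes astar :: "'a \<Rightarrow> 'a"
  assumes scaleC_mult_left: "(c *\<^sub>C x) * y = c *\<^sub>C (x * y)"
    and scaleC_mult_right: "x * (c *\<^sub>C y) = c *\<^sub>C (x * y)"
    and astar_astar: "astar (astar x) = x"
    and astar_add: "astar (x + y) = astar x + astar y"
    and astar_scaleC: "astar (c *\<^sub>C x) = cnj c *\<^sub>C astar x"
    and astar_mult: "astar (x * y) = astar y * astar x"

definition cstar_seminorm :: "('a::complex_star_algebra \<Rightarrow> real) \<Rightarrow> bool" where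
  "cstar_seminorm p \<longleftrightarrow>
     (\<forall>x y. p (x + y) \<le> p x + p y) \<and> (\<forall>c x. p (c *\<^sub>C x) = cmod c * p x) \<and>
     (\<forall>x y. p (x * y) \<le> p x * p y) \<and> (\<forall>x. p (astar x * x) = (p x)\<^sup>2)"

definition seminorm_topology :: "('a::complex_star_algebra \<Rightarrow> real) set \<Rightarrow> 'a topology" where
  "seminorm_topology S = topology_generated_by {{b. p (b - a) < r} | p a r. p \<in> S}"

definition seminorm_complete :: "('a::complex_star_algebra \<Rightarrow> real) set \<Rightarrow> bool" where
  "seminorm_complete S \<longleftrightarrow>
     (\<forall>F. F \<noteq> bot \<and> (\<forall>p\<in>S. \<forall>e>0. \<forall>\<^sub>F (x, y) in F \<times>\<^sub>F F. p (x - y) < e) \<longrightarrow>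
        (\<exists>a. \<forall>p\<in>S. \<forall>e>0. \<forall>\<^sub>F x in F. p (x - a) < e))"

definition pro_cstar_algebra :: "('a::complex_star_algebra \<Rightarrow> real) set \<Rightarrow> bool" where
  "pro_cstar_algebra S \<longleftrightarrow> (\<forall>p\<in>S. cstar_seminorm p) \<and>
     Hausdorff_space (seminorm_topology S) \<and> seminorm_complete S"

definition continuous_op_map ::
  "('a::complex_star_algebra \<Rightarrow> real) set \<Rightarrow> ('a \<Rightarrow> ('h::complex_inner \<Rightarrow> 'k::complex_inner)) \<Rightarrow> bool" where
  "continuous_op_map S f \<longleftrightarrow>
     (\<forall>a b. f (a + b) = (\<lambda>x. f a x + f b x)) \<and> (\<forall>c a. f (c *\<^sub>C a) = (\<lambda>x. c *\<^sub>C f a x)) \<and> continuous_map (seminorm_topology S) opnorm_topology f"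

definition representation ::
  "('a::complex_star_algebra \<Rightarrow> real) set \<Rightarrow> ('a \<Rightarrow> ('k::complex_inner \<Rightarrow> 'k)) \<Rightarrow> bool" where
  "representation S \<Phi> \<longleftrightarrow> continuous_op_map S \<Phi> \<and>
     (\<forall>a b. \<Phi> (a * b) = \<Phi> a \<circ> \<Phi> b) \<and> (\<forall>a. \<Phi> (astar a) = cadjoint (\<Phi> a))"

definition pos_matrix :: "'i set \<Rightarrow> ('i \<Rightarrow> 'i \<Rightarrow> 'a::complex_star_algebra) \<Rightarrow> bool" where
  "pos_matrix I X \<longleftrightarrow> (\<exists>B. \<forall>i\<in>I. \<forall>j\<in>I. X i j = (\<Sum>l\<in>I. astar (B l i) * B l j))"

text \<open>An operator matrix indexed by I is positive as an operator on the direct sum H^I.\<close>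
definition pos_op_matrix :: "'i set \<Rightarrow> ('i \<Rightarrow> 'i \<Rightarrow> ('h::complex_inner \<Rightarrow> 'h)) \<Rightarrow> bool" where
  "pos_op_matrix I T \<longleftrightarrow> (\<forall>\<xi>. let s = (\<Sum>i\<in>I. \<Sum>j\<in>I. cinner (T i j (\<xi> j)) (\<xi> i))
                               in Im s = 0 \<and> 0 \<le> Re s)"

text \<open>An n x n matrix of continuous linear maps A \<rightarrow> L(H) is completely n-positive
  if [a_ij] \<mapsto> [rho_ij(a_ij)] is completely positive, i.e. all its amplifications
  to M_m(M_n(A)) (indexed by {..<m} \<times> {..<n}) are positive.\<close>
definition completely_n_positive ::
  "('a::complex_star_algebra \<Rightarrow> real) set \<Rightarrow> nat \<Rightarrow> (nat \<Rightarrow> nat \<Rightarrow> 'a \<Rightarrow> ('h::complex_inner \<Rightarrow> 'h)) \<Rightarrow> bool" where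
  "completely_n_positive S n \<rho> \<longleftrightarrow>
     (\<forall>i<n. \<forall>j<n. continuous_op_map S (\<rho> i j)) \<and>
     (\<forall>(m::nat) X. pos_matrix ({..<m} \<times> {..<n}) X \<longrightarrow>
        pos_op_matrix ({..<m} \<times> {..<n}) (\<lambda>p q. \<rho> (snd p) (snd q) (X p q)))"

text \<open>CP^n_\<infinity>(A, L(H), I). Matrices are represented as nat-indexed families that
  vanish outside {..<n} \<times> {..<n}.\<close>
definition CPn_I ::
  "('a::complex_star_algebra \<Rightarrow> real) set \<Rightarrow> nat \<Rightarrow> (nat \<Rightarrow> nat \<Rightarrow> 'a \<Rightarrow> ('h::complex_inner \<Rightarrow> 'h)) set" where
  "CPn_I S n = {\<theta>. completely_n_positive S n \<theta> \<and>
      (\<forall>i j. (n \<le> i \<or> n \<le> j) \<longrightarrow> \<theta> i j = (\<lambda>a x. 0)) \<and>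
      (\<forall>i<n. \<theta> i i 1 = id) \<and> (\<forall>i j. i < j \<and> j < n \<longrightarrow> \<theta> i j 1 = (\<lambda>x. 0))}"

definition is_extreme_point :: "('b \<Rightarrow> 'c \<Rightarrow> 'a \<Rightarrow> ('h::real_vector \<Rightarrow> 'h)) set \<Rightarrow> ('b \<Rightarrow> 'c \<Rightarrow> 'a \<Rightarrow> ('h \<Rightarrow> 'h)) \<Rightarrow> bool" where
  "is_extreme_point K \<rho> \<longleftrightarrow> \<rho> \<in> K \<and>
     (\<forall>\<theta> \<theta>' t. \<theta> \<in> K \<and> \<theta>' \<in> K \<and> 0 < t \<and> t < 1 \<and>
        \<rho> = (\<lambda>i j a x. t *\<^sub>R \<theta> i j a x + (1 - t) *\<^sub>R \<theta>' i j a x) \<longrightarrow> \<theta> = \<rho> \<and> \<theta>' = \<rho>)"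

definition stinespring_rep ::
  "('a::complex_star_algebra \<Rightarrow> real) set \<Rightarrow> nat \<Rightarrow> (nat \<Rightarrow> nat \<Rightarrow> 'a \<Rightarrow> ('h::complex_inner \<Rightarrow> 'h))
   \<Rightarrow> ('a \<Rightarrow> ('k::complex_inner \<Rightarrow> 'k)) \<Rightarrow> (nat \<Rightarrow> 'h \<Rightarrow> 'k) \<Rightarrow> bool" where
  "stinespring_rep S n \<rho> \<Phi> V \<longleftrightarrow> representation S \<Phi> \<and>
     (\<forall>i<n. bounded_clinear (V i)) \<and>
     (\<forall>i<n. \<forall>j<n. \<forall>a. \<rho> i j a = cadjoint (V i) \<circ> \<Phi> a \<circ> V j) \<and>
     closure (cspan {\<Phi> a (V i \<xi>) | a i \<xi>. i < n}) = UNIV"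

definition commutant :: "('a \<Rightarrow> ('k::complex_inner \<Rightarrow> 'k)) \<Rightarrow> ('k \<Rightarrow> 'k) set" where
  "commutant \<Phi> = {T. bounded_clinear T \<and> (\<forall>a. T \<circ> \<Phi> a = \<Phi> a \<circ> T)}"

end

theory Submission
  imports Defs
begin

lemma scaleC_zero_right[simp]: "c *\<^sub>C 0 = 0"
proof -
  have "c *\<^sub>C 0 + c *\<^sub>C 0 = c *\<^sub>C 0 + 0" by (simp flip: scaleC_add_right)
  then show ?thesis by (rule add_left_imp_eq)
qed
lemma scaleC_zero_left[simp]: "0 *\<^sub>C x = 0"
proof -
  have "0 *\<^sub>C x + 0 *\<^sub>C x = 0 *\<^sub>C x + 0" by (simp flip: scaleC_add_left)
  then show ?thesis by (rule add_left_imp_eq)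
qed
lemma scaleC_minus_right: "c *\<^sub>C (- x) = - (c *\<^sub>C x)"
proof -
  have "c *\<^sub>C (- x) + c *\<^sub>C x = 0" by (simp flip: scaleC_add_right)
  then show ?thesis by (simp add: eq_neg_iff_add_eq_0)
qed
lemma scaleC_minus_left: "(- c) *\<^sub>C x = - (c *\<^sub>C x)"
proof -
  have "(- c) *\<^sub>C x + c *\<^sub>C x = 0" by (simp flip: scaleC_add_left)
  then show ?thesis by (simp add: eq_neg_iff_add_eq_0)
qed
lemma scaleC_diff_right: "c *\<^sub>C (x - y) = c *\<^sub>C x - c *\<^sub>C y"
  using scaleC_add_right[of c x "-y"] by (simp add: scaleC_minus_right)
lemma scaleC_diff_left: "(c - d) *\<^sub>C x = c *\<^sub>C x - d *\<^sub>C x"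
  using scaleC_add_left[of c "-d" x] by (simp add: scaleC_minus_left)
lemma scaleC_sum_right: "c *\<^sub>C (\<Sum>i\<in>A. f i) = (\<Sum>i\<in>A. c *\<^sub>C f i)"
  by (induction A rule: infinite_finite_induct) (auto simp: scaleC_add_right)
lemma scaleC_sum_left: "(\<Sum>i\<in>A. f i) *\<^sub>C x = (\<Sum>i\<in>A. f i *\<^sub>C x)"
  by (induction A rule: infinite_finite_induct) (auto simp: scaleC_add_left)
lemma cinner_add_right: "cinner x (y + z) = cinner x y + cinner x z"
  using cinner_cnj[of x "y+z"] cinner_cnj[of y x] cinner_cnj[of z x]
  by (simp add: cinner_add_left)
lemma cinner_scaleC_right: "cinner x (c *\<^sub>C y) = cnj c * cinner x y"
  using cinner_cnj[of x "c *\<^sub>C y"] cinner_cnj[of y x]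
  by (simp add: cinner_scaleC_left)
lemma cinner_zero_left[simp]: "cinner 0 y = 0"
proof -
  have "cinner 0 y + cinner 0 y = cinner 0 y + 0" by (simp flip: cinner_add_left)
  then show ?thesis by simp
qed
lemma cinner_zero_right[simp]: "cinner x 0 = 0"
  using cinner_cnj[of x 0] by simp
lemma cinner_minus_left: "cinner (- x) y = - cinner x y"
proof -
  have "cinner (- x) y + cinner x y = 0" by (simp flip: cinner_add_left)
  then show ?thesis by (rule iffD2[OF eq_neg_iff_add_eq_0])
qed
lemma cinner_minus_right: "cinner x (- y) = - cinner x y"
proof -
  have "cinner x (- y) + cinner x y = 0" by (simp flip: cinner_add_right)
  then show ?thesis by (rule iffD2[OF eq_neg_iff_add_eq_0])
qed
lemma cinner_diff_left: "cinner (x - y) z = cinner x z - cinner y z"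
  using cinner_add_left[of x "-y" z] by (simp add: cinner_minus_left)
lemma cinner_diff_right: "cinner x (y - z) = cinner x y - cinner x z"
  using cinner_add_right[of x y "-z"] by (simp add: cinner_minus_right)
lemma cinner_sum_left: "cinner (\<Sum>i\<in>A. f i) y = (\<Sum>i\<in>A. cinner (f i) y)"
  by (induction A rule: infinite_finite_induct) (auto simp: cinner_add_left)
lemma cinner_sum_right: "cinner x (\<Sum>i\<in>A. f i) = (\<Sum>i\<in>A. cinner x (f i))"
  by (induction A rule: infinite_finite_induct) (auto simp: cinner_add_right)
lemma cinner_self_eq: "cinner x x = complex_of_real ((norm x)\<^sup>2)"
  using cinner_self_real[of x] cinner_self_nonneg[of x] norm_eq_sqrt_cinner[of x]
  by (simp add: complex_eq_iff)
lemma cinner_scaleR_left: "cinner (r *\<^sub>R x) y = complex_of_real r * cinner x y"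
  by (simp add: scaleR_scaleC cinner_scaleC_left)
lemma cinner_scaleR_right: "cinner x (r *\<^sub>R y) = complex_of_real r * cinner x y"
  by (simp add: scaleR_scaleC cinner_scaleC_right)
lemma norm_sq_cinner: "(norm x)\<^sup>2 = Re (cinner x x)"
  by (simp add: cinner_self_eq)

lemma cauchy_schwarz: "cmod (cinner x y) \<le> norm x * norm y"
proof (cases "y = 0")
  case True then show ?thesis by simp
next
  case False
  define b where "b = cinner x y"
  define N where "N = (norm y)\<^sup>2"
  have ny: "N > 0" using False by (simp add: N_def)
  have byx: "cinner y x = cnj b" unfolding b_def by (rule cinner_cnj)
  have yy: "cinner y y = complex_of_real N" unfolding N_def by (rule cinner_self_eq)
  have xx: "cinner x x = complex_of_real ((norm x)\<^sup>2)" by (rule cinner_self_eq)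
  define z where "z = complex_of_real N *\<^sub>C x - b *\<^sub>C y"
  have "cinner z z = complex_of_real N * complex_of_real N * cinner x x - complex_of_real N * cnj b * cinner x y
     - b * complex_of_real N * cinner y x + b * cnj b * cinner y y"
    unfolding z_def cinner_diff_left cinner_diff_right cinner_scaleC_left cinner_scaleC_right
    by (simp add: algebra_simps)
  also have "\<dots> = complex_of_real N * complex_of_real N * complex_of_real ((norm x)\<^sup>2) - complex_of_real N * (b * cnj b)"
    unfolding xx yy byx b_def[symmetric] by (simp add: algebra_simps)
  also have "b * cnj b = complex_of_real ((cmod b)\<^sup>2)" by (rule complex_norm_square[symmetric])
  also have "complex_of_real N * complex_of_real N * complex_of_real ((norm x)\<^sup>2) - complex_of_real N * complex_of_real ((cmod b)\<^sup>2)
     = complex_of_real (N * (N * (norm x)\<^sup>2 - (cmod b)\<^sup>2))" by (simp add: algebra_simps)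
  finally have "0 \<le> N * (N * (norm x)\<^sup>2 - (cmod b)\<^sup>2)"
    using cinner_self_nonneg[of z] by simp
  then have "(cmod b)\<^sup>2 \<le> N * (norm x)\<^sup>2" using ny by (simp add: zero_le_mult_iff)
  then have "(cmod b)\<^sup>2 \<le> (norm x * norm y)\<^sup>2" by (simp add: N_def power_mult_distrib mult.commute)
  then show ?thesis unfolding b_def by (meson norm_ge_zero power2_le_imp_le zero_le_mult_iff)
qed

lemma norm_scaleC: "norm (c *\<^sub>C (x::'a::complex_inner)) = cmod c * norm x"
proof -
  have cc: "c * cnj c = complex_of_real ((cmod c)\<^sup>2)" by (rule complex_norm_square[symmetric])
  have "cinner (c *\<^sub>C x) (c *\<^sub>C x) = (c * cnj c) * cinner x x"
    by (simp add: cinner_scaleC_left cinner_scaleC_right algebra_simps)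
  also have "\<dots> = complex_of_real ((cmod c)\<^sup>2 * (norm x)\<^sup>2)" unfolding cc cinner_self_eq of_real_mult by (rule refl)
  finally have "(norm (c *\<^sub>C x))\<^sup>2 = (cmod c)\<^sup>2 * (norm x)\<^sup>2"
    unfolding norm_sq_cinner by simp
  then have "(norm (c *\<^sub>C x))\<^sup>2 = (cmod c * norm x)\<^sup>2" by (simp add: power_mult_distrib)
  then show ?thesis by (simp add: power2_eq_iff_nonneg)
qed


lemma clinear_add: "clinear f \<Longrightarrow> f (x + y) = f x + f y" by (simp add: clinear_def)
lemma clinear_scaleC: "clinear f \<Longrightarrow> f (c *\<^sub>C x) = c *\<^sub>C f x" by (simp add: clinear_def)
lemma clinear_zero: "clinear f \<Longrightarrow> f 0 = 0"
  using clinear_scaleC[of f 0 0] by simp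
lemma clinear_minus: "clinear f \<Longrightarrow> f (- x) = - f x"
  using clinear_add[of f "-x" x] clinear_zero[of f] by (simp add: eq_neg_iff_add_eq_0)
lemma clinear_diff: "clinear f \<Longrightarrow> f (x - y) = f x - f y"
  using clinear_add[of f x "-y"] clinear_minus[of f y] by simp
lemma clinear_sum: "clinear f \<Longrightarrow> f (\<Sum>i\<in>A. g i) = (\<Sum>i\<in>A. f (g i))"
  by (induction A rule: infinite_finite_induct) (auto simp: clinear_add clinear_zero)

lemma bounded_clinear_clinear: "bounded_clinear f \<Longrightarrow> clinear f" by (simp add: bounded_clinear_def)

lemma bounded_clinear_bounded_linear:
  assumes "bounded_clinear (f :: 'a::complex_inner \<Rightarrow> 'b::complex_inner)"
  shows "bounded_linear f"
proof -
  from assms obtain K where K: "\<And>x. norm (f x) \<le> norm x * K" and l: "clinear f"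
    by (auto simp: bounded_clinear_def)
  show ?thesis
    by (rule bounded_linear_intro[where K=K]) (auto simp: K clinear_add[OF l] scaleR_scaleC clinear_scaleC[OF l])
qed

lemma bounded_clinear_intro:
  assumes "\<And>x y. f (x + y) = f x + f y" "\<And>c x. f (c *\<^sub>C x) = c *\<^sub>C f x" "\<And>x. norm (f x) \<le> norm x * K"
  shows "bounded_clinear f"
  using assms by (auto simp: bounded_clinear_def clinear_def)

lemma bounded_clinear_id: "bounded_clinear (id :: 'a::complex_inner \<Rightarrow> 'a)"
  by (rule bounded_clinear_intro[where K=1]) auto
lemma bounded_clinear_ident: "bounded_clinear (\<lambda>x::'a::complex_inner. x)"
  by (rule bounded_clinear_intro[where K=1]) auto

lemma bounded_clinear_iff: "bounded_clinear (f :: 'a::complex_inner \<Rightarrow> 'b::complex_inner) \<longleftrightarrow> clinear f \<and> bounded_linear f"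
proof
  assume "bounded_clinear f" then show "clinear f \<and> bounded_linear f"
    by (simp add: bounded_clinear_clinear bounded_clinear_bounded_linear)
next
  assume a: "clinear f \<and> bounded_linear f"
  then obtain K where "\<And>x. norm (f x) \<le> norm x * K" using bounded_linear.bounded by blast
  with a show "bounded_clinear f" by (auto simp: bounded_clinear_def)
qed

lemma clinear_compose: "clinear f \<Longrightarrow> clinear g \<Longrightarrow> clinear (f \<circ> g)"
  by (simp add: clinear_def)

lemma bounded_clinear_compose:
  assumes "bounded_clinear (f :: 'b::complex_inner \<Rightarrow> 'c::complex_inner)" "bounded_clinear (g :: 'a::complex_inner \<Rightarrow> 'b)"
  shows "bounded_clinear (f \<circ> g)"
proof -
  have "clinear (f \<circ> g)" using assms by (simp add: bounded_clinear_clinear clinear_compose)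
  moreover have "bounded_linear (\<lambda>x. f (g x))"
    using assms by (simp add: bounded_clinear_iff bounded_linear_compose)
  ultimately show ?thesis unfolding bounded_clinear_iff by (simp add: comp_def)
qed


lemma bounded_bilinear_cinner: "bounded_bilinear (cinner :: 'a::complex_inner \<Rightarrow> 'a \<Rightarrow> complex)"
proof
  fix a a' b b' :: 'a and r :: real
  show "cinner (a + a') b = cinner a b + cinner a' b" by (rule cinner_add_left)
  show "cinner a (b + b') = cinner a b + cinner a b'" by (rule cinner_add_right)
  show "cinner (r *\<^sub>R a) b = r *\<^sub>R cinner a b" by (simp add: cinner_scaleR_left scaleR_conv_of_real)
  show "cinner a (r *\<^sub>R b) = r *\<^sub>R cinner a b" by (simp add: cinner_scaleR_right scaleR_conv_of_real)
next
  show "\<exists>K. \<forall>a b::'a. norm (cinner a b) \<le> norm a * norm b * K"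
    by (rule exI[of _ 1]) (simp add: cauchy_schwarz)
qed

lemma continuous_cinner_right: "continuous_on UNIV (\<lambda>y. cinner (x::'a::complex_inner) y)"
  by (rule linear_continuous_on, rule bounded_bilinear.bounded_linear_right[OF bounded_bilinear_cinner])
lemma continuous_cinner_left: "continuous_on UNIV (\<lambda>y. cinner (y::'a::complex_inner) x)"
  by (rule linear_continuous_on, rule bounded_bilinear.bounded_linear_left[OF bounded_bilinear_cinner])

lemma dense_agree:
  fixes f g :: "'a::topological_space \<Rightarrow> 'b::t2_space"
  assumes "continuous_on UNIV f" "continuous_on UNIV g" "closure D = UNIV" "\<And>x. x \<in> D \<Longrightarrow> f x = g x"
  shows "f x = g x"
proof -
  have "D \<subseteq> {x. f x = g x}" using assms(4) by auto
  then have "closure D \<subseteq> {x. f x = g x}"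
    by (rule closure_minimal) (rule closed_Collect_eq[OF assms(1,2)])
  then show ?thesis using assms(3) by auto
qed

lemma cinner_self_zero: "cinner x x = 0 \<Longrightarrow> x = 0"
  using cinner_self_eq_zero by blast

lemma cinner_ext_left: "(\<And>z. cinner x z = cinner y z) \<Longrightarrow> x = (y::'a::complex_inner)"
  using cinner_self_zero[of "x - y"] by (metis cinner_diff_left diff_self eq_iff_diff_eq_0)
lemma cinner_ext_right: "(\<And>z. cinner z x = cinner z y) \<Longrightarrow> x = (y::'a::complex_inner)"
  using cinner_self_zero[of "x - y"] by (metis cinner_diff_right diff_self eq_iff_diff_eq_0)

lemma cinner_dense_zero:
  fixes x :: "'a::complex_inner"
  assumes "closure D = UNIV" "\<And>d. d \<in> D \<Longrightarrow> cinner x d = 0"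
  shows "x = 0"
proof -
  have "cinner x x = (\<lambda>_. 0) x"
    by (rule dense_agree[OF continuous_cinner_right _ assms(1)]) (auto simp: assms(2))
  then show ?thesis by (simp add: cinner_self_zero)
qed

lemma norm_add_sq: "(norm (x + y))\<^sup>2 = (norm x)\<^sup>2 + (norm y)\<^sup>2 + 2 * Re (cinner x (y::'a::complex_inner))"
proof -
  have "cinner (x + y) (x + y) = cinner x x + cinner y y + (cinner x y + cnj (cinner x y))"
    using cinner_cnj[of y x] by (simp add: cinner_add_left cinner_add_right)
  then show ?thesis unfolding norm_sq_cinner by simp
qed

lemma parallelogram: "(norm (x + y))\<^sup>2 + (norm (x - y))\<^sup>2 = 2 * (norm x)\<^sup>2 + 2 * (norm (y::'a::complex_inner))\<^sup>2"
  using norm_add_sq[of x y] norm_add_sq[of x "-y"] by (simp add: cinner_minus_right)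


lemma min_norm:
  fixes C :: "'a::chilbert_space set"
  assumes cl: "closed C" and cv: "convex C" and ne: "C \<noteq> {}"
  shows "\<exists>z\<in>C. \<forall>c\<in>C. norm z \<le> norm c"
proof -
  have aux: "\<And>A B P Q R D::real. P \<le> A \<Longrightarrow> Q \<le> B \<Longrightarrow> D \<le> R \<Longrightarrow> 2*P + 2*Q - R \<le> 2*A + 2*B - D" by linarith
  define d where "d = Inf (norm ` C)"
  have bdd: "bdd_below (norm ` C)" by (rule bdd_belowI[of _ 0]) auto
  have dle: "d \<le> norm c" if "c \<in> C" for c unfolding d_def using bdd that by (simp add: cInf_lower)
  have d0: "0 \<le> d" unfolding d_def using ne by (intro cInf_greatest) auto
  have ex: "\<exists>c. c \<in> C \<and> norm c < d + e" if "e > 0" for e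
  proof -
    have "Inf (norm ` C) < d + e" using that by (simp add: d_def)
    moreover have "norm ` C \<noteq> {}" using ne by simp
    ultimately obtain x where "x \<in> norm ` C" "x < d + e" using cInf_lessD[of "norm ` C"] by blast
    then obtain c where "c \<in> C" "x = norm c" by blast
    then show ?thesis using \<open>x < d + e\<close> by blast
  qed
  define e where "e k = inverse (real (Suc k))" for k
  have e_pos: "e k > 0" for k by (simp add: e_def)
  have e_le1: "e k \<le> 1" for k by (simp add: e_def inverse_le_1_iff)
  have e_mono: "e l \<le> e k" if "k \<le> l" for k l unfolding e_def by (rule le_imp_inverse_le) (use that in auto)
  have "\<forall>k. \<exists>x. x \<in> C \<and> norm x < d + e k" proof
    fix k show "\<exists>x. x \<in> C \<and> norm x < d + e k" by (rule ex[OF e_pos])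
  qed
  from choice[OF this] obtain c where c0: "\<forall>k. c k \<in> C \<and> norm (c k) < d + e k" by blast
  then have c: "\<And>k. c k \<in> C" "\<And>k. norm (c k) < d + e k" by auto
  have csq: "(norm (c k))\<^sup>2 \<le> d\<^sup>2 + (2 * d + 1) * e k" for k
  proof -
    have "(norm (c k))\<^sup>2 \<le> (d + e k)\<^sup>2"
      using c(2)[of k] by (intro power_mono) auto
    also have "\<dots> = d\<^sup>2 + 2 * d * e k + e k * e k" by (simp add: power2_eq_square algebra_simps)
    also have "e k * e k \<le> e k" using e_le1[of k] e_pos[of k] by (simp add: mult_le_cancel_right1)
    finally show ?thesis by (simp add: algebra_simps)
  qed
  have mid: "2 * d \<le> norm (c k + c l)" for k l
  proof -
    have "(1/2) *\<^sub>R c k + (1/2) *\<^sub>R c l \<in> C" by (rule convexD[OF cv c(1) c(1)]) auto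
    then have "d \<le> norm ((1/2) *\<^sub>R (c k + c l))" using dle by (simp add: scaleR_add_right)
    then show ?thesis by simp
  qed
  have diff: "(norm (c k - c l))\<^sup>2 \<le> 2 * (2 * d + 1) * (e k + e l)" for k l
  proof -
    have "(norm (c k - c l))\<^sup>2 = 2 * (norm (c k))\<^sup>2 + 2 * (norm (c l))\<^sup>2 - (norm (c k + c l))\<^sup>2"
      using parallelogram[of "c k" "c l"] by simp
    also have "(2 * d)\<^sup>2 \<le> (norm (c k + c l))\<^sup>2" using mid[of k l] d0 by (intro power_mono) auto
    then have "2 * (norm (c k))\<^sup>2 + 2 * (norm (c l))\<^sup>2 - (norm (c k + c l))\<^sup>2
       \<le> 2 * (d\<^sup>2 + (2 * d + 1) * e k) + 2 * (d\<^sup>2 + (2 * d + 1) * e l) - (2 * d)\<^sup>2"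
      using csq[of k] csq[of l] \<open>(2 * d)\<^sup>2 \<le> _\<close>
        by (intro aux)
    also have "\<dots> = 2 * (2 * d + 1) * (e k + e l)" by (simp add: power2_eq_square algebra_simps)
    finally show ?thesis .
  qed
  have "Cauchy c"
  proof (rule metric_CauchyI)
    fix eps :: real assume eps: "eps > 0"
    define q where "q = eps\<^sup>2 / (4 * (2 * d + 1))"
    have q: "q > 0" using eps d0 by (simp add: q_def)
    obtain M where M: "inverse (real (Suc M)) < q" using reals_Archimedean[OF q] by blast
    show "\<exists>M. \<forall>m\<ge>M. \<forall>n\<ge>M. dist (c m) (c n) < eps"
    proof (intro exI allI impI)
      fix m n assume mn: "M \<le> m" "M \<le> n"
      have "(dist (c m) (c n))\<^sup>2 \<le> 2 * (2 * d + 1) * (e m + e n)" unfolding dist_norm by (rule diff)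
      also have "\<dots> \<le> 2 * (2 * d + 1) * (e M + e M)"
        using e_mono[OF mn(1)] e_mono[OF mn(2)] d0 by (intro mult_left_mono) auto
      also have "\<dots> < 2 * (2 * d + 1) * (q + q)"
        using M d0 by (intro mult_strict_left_mono) (auto simp: e_def)
      also have "\<dots> = (4 * (2 * d + 1)) * q" by (simp add: algebra_simps)
      also have "\<dots> = eps\<^sup>2" unfolding q_def times_divide_eq_right
        by (rule nonzero_mult_div_cancel_left) (use d0 in simp)
      finally show "dist (c m) (c n) < eps"
        by (rule power2_less_imp_less) (use eps in auto)
    qed
  qed
  then obtain z where lim: "c \<longlonglongrightarrow> z" using Cauchy_convergent_iff convergent_def by blast
  have zC: "z \<in> C" using closed_sequentially[OF cl _ lim] c(1) by blast
  have "(\<lambda>k. norm (c k)) \<longlonglongrightarrow> norm z" by (rule tendsto_norm[OF lim])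
  moreover have "(\<lambda>k. d + e k) \<longlonglongrightarrow> d + 0"
    unfolding e_def by (intro tendsto_add tendsto_const LIMSEQ_inverse_real_of_nat)
  ultimately have "norm z \<le> d + 0" by (rule LIMSEQ_le) (use c(2) less_imp_le in blast)
  then show ?thesis using zC dle by force
qed

lemma riesz:
  fixes g :: "'a::chilbert_space \<Rightarrow> complex"
  assumes bl: "bounded_linear g" and hom: "\<And>c x. g (c *\<^sub>C x) = c * g x"
  shows "\<exists>z. \<forall>x. g x = cinner x z"
proof (cases "\<forall>x. g x = 0")
  case True then show ?thesis by (intro exI[of _ 0]) simp
next
  case False
  then obtain x0 where x0: "g x0 \<noteq> 0" by blast
  have gadd: "g (x + y) = g x + g y" for x y by (rule linear_add[OF bounded_linear.linear[OF bl]])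
  have gsc: "g (r *\<^sub>R x) = r *\<^sub>R g x" for r x by (rule linear_scale[OF bounded_linear.linear[OF bl]])
  have g0: "g 0 = 0" by (rule linear_0[OF bounded_linear.linear[OF bl]])
  define x1 where "x1 = inverse (g x0) *\<^sub>C x0"
  have gx1: "g x1 = 1" using x0 by (simp add: x1_def hom)
  define C where "C = {x. g x = 1}"
  have cl: "closed C" unfolding C_def
    by (rule closed_Collect_eq) (auto intro: linear_continuous_on bl continuous_on_const)
  have cv: "convex C" unfolding C_def
  proof (rule convexI)
    fix x y u v assume "x \<in> {x. g x = 1}" "y \<in> {x. g x = 1}" "(0::real) \<le> u" "0 \<le> v" "u + v = 1"
    then show "u *\<^sub>R x + v *\<^sub>R y \<in> {x. g x = 1}"
      by (simp add: gadd gsc scaleR_conv_of_real flip: of_real_add)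
  qed
  have ne: "C \<noteq> {}" using gx1 C_def by auto
  obtain z0 where z0C: "z0 \<in> C" and zmin: "\<And>c. c \<in> C \<Longrightarrow> norm z0 \<le> norm c"
    using min_norm[OF cl cv ne] by blast
  have gz0: "g z0 = 1" using z0C C_def by simp
  have z0nz: "z0 \<noteq> 0" using gz0 g0 by auto
  have orth: "cinner n z0 = 0" if gn: "g n = 0" for n
  proof -
    define \<beta> where "\<beta> = cinner z0 n"
    define t where "t = 1 / ((norm n)\<^sup>2 + 1)"
    have np: "(norm n)\<^sup>2 + 1 > 0" by (rule add_nonneg_pos) auto
    have t0: "t > 0" by (simp add: t_def np)
    have t1: "t * (norm n)\<^sup>2 < 1" unfolding t_def using np by (simp add: field_simps)
    define s where "s = - (complex_of_real t * \<beta>)"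
    have "g (z0 + s *\<^sub>C n) = 1" using gz0 gn by (simp add: gadd hom)
    then have "norm z0 \<le> norm (z0 + s *\<^sub>C n)" using zmin C_def by simp
    then have "(norm z0)\<^sup>2 \<le> (norm (z0 + s *\<^sub>C n))\<^sup>2" by (simp add: power_mono)
    also have "\<dots> = (norm z0)\<^sup>2 + (norm (s *\<^sub>C n))\<^sup>2 + 2 * Re (cinner z0 (s *\<^sub>C n))" by (rule norm_add_sq)
    also have "(norm (s *\<^sub>C n))\<^sup>2 = t\<^sup>2 * (cmod \<beta>)\<^sup>2 * (norm n)\<^sup>2"
      using t0 by (simp add: norm_scaleC s_def norm_mult power_mult_distrib)
    also have "Re (cinner z0 (s *\<^sub>C n)) = - t * (cmod \<beta>)\<^sup>2"
    proof -
      have "cinner z0 (s *\<^sub>C n) = - (complex_of_real t * (cnj \<beta> * \<beta>))"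
        by (simp add: cinner_scaleC_right s_def \<beta>_def)
      also have "cnj \<beta> * \<beta> = complex_of_real ((cmod \<beta>)\<^sup>2)"
        by (subst mult.commute, rule complex_norm_square[symmetric])
      finally show ?thesis by simp
    qed
    finally have "0 \<le> t * (cmod \<beta>)\<^sup>2 * (t * (norm n)\<^sup>2 - 2)"
      by (simp add: algebra_simps power2_eq_square)
    moreover have "t * (norm n)\<^sup>2 - 2 < 0" using t1 by simp
    moreover have gen: "\<And>A B::real. 0 \<le> A*B \<Longrightarrow> B<0 \<Longrightarrow> A \<le> 0" by (auto simp: zero_le_mult_iff)
    ultimately have "t * (cmod \<beta>)\<^sup>2 \<le> 0" by blast
    then have "(cmod \<beta>)\<^sup>2 \<le> 0" using t0 by (simp add: mult_le_0_iff)
    then have "\<beta> = 0" by simp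
    then show ?thesis using cinner_cnj[of n z0] by (simp add: \<beta>_def)
  qed
  define N where "N = (norm z0)\<^sup>2"
  have N0: "N > 0" using z0nz by (simp add: N_def)
  show ?thesis
  proof (intro exI allI)
    fix x
    have "g (x - g x *\<^sub>C z0) = 0"
      by (simp add: linear_diff[OF bounded_linear.linear[OF bl]] hom gz0)
    then have "cinner (x - g x *\<^sub>C z0) z0 = 0" by (rule orth)
    then have e: "cinner x z0 = g x * complex_of_real N"
      by (simp add: cinner_diff_left cinner_scaleC_left cinner_self_eq N_def)
    show "g x = cinner x (complex_of_real (inverse N) *\<^sub>C z0)"
      unfolding cinner_scaleC_right e using N0 by (simp add: field_simps)
  qed
qed


definition is_adj :: "('a::complex_inner \<Rightarrow> 'b::complex_inner) \<Rightarrow> ('b \<Rightarrow> 'a) \<Rightarrow> bool" where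
  "is_adj T S \<longleftrightarrow> (\<forall>x y. cinner (T x) y = cinner x (S y))"

lemma is_adjD: "is_adj T S \<Longrightarrow> cinner (T x) y = cinner x (S y)" by (simp add: is_adj_def)

lemma is_adj_sym: "is_adj T S \<Longrightarrow> is_adj S T"
  unfolding is_adj_def by (metis cinner_cnj)

lemma is_adj_unique: "is_adj T S \<Longrightarrow> cadjoint T = S"
  unfolding cadjoint_def
proof (rule the_equality)
  assume "is_adj T S" then show "\<forall>x y. cinner (T x) y = cinner x (S y)" by (simp add: is_adj_def)
next
  fix S' assume a: "is_adj T S" and b: "\<forall>x y. cinner (T x) y = cinner x (S' y)"
  show "S' = S"
  proof
    fix y show "S' y = S y" using a b by (intro cinner_ext_right) (simp add: is_adj_def)
  qed
qed

lemma is_adj_clinear: "is_adj T S \<Longrightarrow> clinear S"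
  unfolding clinear_def
proof (intro conjI allI)
  assume a: "is_adj T S"
  fix x y c
  show "S (x + y) = S x + S y"
    by (rule cinner_ext_right) (simp add: is_adjD[OF a, symmetric] cinner_add_right)
  show "S (c *\<^sub>C x) = c *\<^sub>C S x"
    by (rule cinner_ext_right) (simp add: is_adjD[OF a, symmetric] cinner_scaleC_right)
qed

lemma is_adj_clinear_left: "is_adj T S \<Longrightarrow> clinear T"
  using is_adj_clinear is_adj_sym by blast

lemma is_adj_bounded:
  assumes "is_adj T S" "bounded_clinear T"
  shows "bounded_clinear S"
proof -
  obtain K0 where K0: "\<And>x. norm (T x) \<le> norm x * K0" using assms(2) by (auto simp: bounded_clinear_def)
  define K where "K = max 0 K0"
  have K: "norm (T x) \<le> norm x * K" for x
    using K0[of x] mult_left_mono[of K0 K "norm x"] by (simp add: K_def)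
  have Kp: "0 \<le> K" by (simp add: K_def)
  have "norm (S y) \<le> norm y * K" for y
  proof (cases "S y = 0")
    case True then show ?thesis using Kp by simp
  next
    case False
    have "(norm (S y))\<^sup>2 = cmod (cinner (S y) (S y))" unfolding cinner_self_eq norm_of_real by simp
    also have "cinner (S y) (S y) = cinner (T (S y)) y" by (simp add: is_adjD[OF assms(1)])
    also have "cmod \<dots> \<le> norm (T (S y)) * norm y" by (rule cauchy_schwarz)
    also have "\<dots> \<le> norm (S y) * K * norm y" by (rule mult_right_mono[OF K]) simp
    finally have "norm (S y) * norm (S y) \<le> norm (S y) * (norm y * K)" by (simp add: power2_eq_square algebra_simps)
    then show ?thesis using False by simp
  qed
  then show ?thesis using is_adj_clinear[OF assms(1)] by (auto simp: bounded_clinear_def)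
qed

lemma adj_exists:
  fixes T :: "'a::chilbert_space \<Rightarrow> 'b::complex_inner"
  assumes "bounded_clinear T"
  shows "is_adj T (cadjoint T)"
proof -
  have "\<forall>y. \<exists>z. \<forall>x. cinner (T x) y = cinner x z"
  proof
    fix y
    have bl: "bounded_linear (\<lambda>x. cinner (T x) y)"
      using bounded_linear_compose[OF bounded_bilinear.bounded_linear_left[OF bounded_bilinear_cinner]
          bounded_clinear_bounded_linear[OF assms]] by simp
    show "\<exists>z. \<forall>x. cinner (T x) y = cinner x z"
      by (rule riesz[OF bl]) (simp add: clinear_scaleC[OF bounded_clinear_clinear[OF assms]] cinner_scaleC_left)
  qed
  from choice[OF this] obtain S where "\<forall>y x. cinner (T x) y = cinner x (S y)" by blast
  then have "is_adj T S" by (simp add: is_adj_def)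
  then show ?thesis using is_adj_unique by metis
qed

lemma cadjoint_bounded: "bounded_clinear (T::'a::chilbert_space \<Rightarrow> 'b::complex_inner) \<Longrightarrow> bounded_clinear (cadjoint T)"
  using adj_exists is_adj_bounded by blast

lemma cadjoint_inner: "bounded_clinear (T::'a::chilbert_space \<Rightarrow> 'b::complex_inner) \<Longrightarrow> cinner (T x) y = cinner x (cadjoint T y)"
  using adj_exists is_adjD by blast


lemma cont_compose_op:
  fixes \<Phi> :: "'x \<Rightarrow> ('b::complex_inner \<Rightarrow> 'c::complex_inner)" and L :: "'c \<Rightarrow> 'd::complex_inner"
    and R :: "'e::complex_inner \<Rightarrow> 'b"
  assumes cont: "continuous_map X opnorm_topology \<Phi>" and L: "bounded_clinear L" and R: "bounded_clinear R"
  shows "continuous_map X opnorm_topology (\<lambda>a. L \<circ> \<Phi> a \<circ> R)"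
proof -
  define G1 where "G1 = {{T. onorm (\<lambda>x. T x - T0 x) < r} | (T0 :: 'b \<Rightarrow> 'c) r. bounded_clinear T0}"
  define G2 where "G2 = {{T. onorm (\<lambda>x. T x - T0 x) < r} | (T0 :: 'e \<Rightarrow> 'd) r. bounded_clinear T0}"
  define f where "f a = L \<circ> \<Phi> a \<circ> R" for a
  have c1: "continuous_map X (topology_generated_by G1) \<Phi>" and b1: "\<And>a. a \<in> topspace X \<Longrightarrow> bounded_clinear (\<Phi> a)"
    using cont unfolding opnorm_topology_def continuous_map_in_subtopology G1_def by auto
  have bf: "bounded_clinear (f a)" if "a \<in> topspace X" for a
    unfolding f_def by (intro bounded_clinear_compose L R b1 that)
  have blL: "bounded_linear L" and blR: "bounded_linear R"
    using L R by (simp_all add: bounded_clinear_bounded_linear)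
  define cL where "cL = onorm L"
  define cR where "cR = onorm R"
  have cL0: "0 \<le> cL" and cR0: "0 \<le> cR" using onorm_pos_le blL blR by (auto simp: cL_def cR_def)
  define c where "c = cL * cR + 1"
  have c0: "c > 0" using cL0 cR0 by (simp add: c_def add_nonneg_pos)
  have basis: "openin X {a \<in> topspace X. f a \<in> s}" if "s \<in> G2" for s
  proof -
    obtain T0 r where s: "s = {T. onorm (\<lambda>x. T x - T0 x) < r}" and T0: "bounded_clinear T0"
      using \<open>s \<in> G2\<close> unfolding G2_def by blast
    show ?thesis
    proof (subst openin_subopen, intro ballI)
      fix a0 assume a0: "a0 \<in> {a \<in> topspace X. f a \<in> s}"
      then have a0X: "a0 \<in> topspace X" and lt: "onorm (\<lambda>x. f a0 x - T0 x) < r" using s by auto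
      define \<delta> where "\<delta> = r - onorm (\<lambda>x. f a0 x - T0 x)"
      have d0: "\<delta> > 0" using lt by (simp add: \<delta>_def)
      define N where "N = {a \<in> topspace X. \<Phi> a \<in> {T. onorm (\<lambda>x. T x - \<Phi> a0 x) < \<delta> / c}}"
      have "{T. onorm (\<lambda>x. T x - \<Phi> a0 x) < \<delta> / c} \<in> G1" unfolding G1_def using b1[OF a0X] by blast
      then have "openin (topology_generated_by G1) {T. onorm (\<lambda>x. T x - \<Phi> a0 x) < \<delta> / c}"
        by (simp add: openin_topology_generated_by_iff generate_topology_on.Basis)
      then have Nopen: "openin X N" using c1 unfolding N_def continuous_map_def by blast
      have a0N: "a0 \<in> N" unfolding N_def using a0X d0 c0 by (simp add: onorm_zero)
      have "N \<subseteq> {a \<in> topspace X. f a \<in> s}"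
      proof
        fix a assume aN: "a \<in> N"
        then have aX: "a \<in> topspace X" and t: "onorm (\<lambda>x. \<Phi> a x - \<Phi> a0 x) < \<delta> / c" by (auto simp: N_def)
        have blPa: "bounded_linear (\<Phi> a)" "bounded_linear (\<Phi> a0)"
          using b1[OF aX] b1[OF a0X] by (simp_all add: bounded_clinear_bounded_linear)
        have bld: "bounded_linear (\<lambda>x. \<Phi> a x - \<Phi> a0 x)" by (rule bounded_linear_sub[OF blPa])
        have blf: "bounded_linear (f a)" "bounded_linear (f a0)" "bounded_linear T0"
          using bf[OF aX] bf[OF a0X] T0 by (simp_all add: bounded_clinear_bounded_linear)
        have bLd: "bounded_linear (L \<circ> (\<lambda>x. \<Phi> a x - \<Phi> a0 x))"
          unfolding comp_def by (rule bounded_linear_compose[OF blL bld])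
        have eq: "(\<lambda>x. f a x - f a0 x) = L \<circ> (\<lambda>x. \<Phi> a x - \<Phi> a0 x) \<circ> R"
          by (auto simp: f_def linear_diff[OF bounded_linear.linear[OF blL]])
        have "onorm (\<lambda>x. f a x - f a0 x) \<le> onorm (L \<circ> (\<lambda>x. \<Phi> a x - \<Phi> a0 x)) * cR"
          unfolding eq cR_def
          by (rule onorm_compose[OF bLd blR])
        also have "onorm (L \<circ> (\<lambda>x. \<Phi> a x - \<Phi> a0 x)) \<le> cL * onorm (\<lambda>x. \<Phi> a x - \<Phi> a0 x)"
          unfolding cL_def by (rule onorm_compose[OF blL bld])
        then have "onorm (L \<circ> (\<lambda>x. \<Phi> a x - \<Phi> a0 x)) * cR \<le> cL * onorm (\<lambda>x. \<Phi> a x - \<Phi> a0 x) * cR"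
          using cR0 by (rule mult_right_mono)
        also have "\<dots> \<le> c * onorm (\<lambda>x. \<Phi> a x - \<Phi> a0 x)"
          using onorm_pos_le[OF bld] unfolding c_def by (simp add: algebra_simps)
        also have "\<dots> < c * (\<delta> / c)" using t c0 by (rule mult_strict_left_mono)
        also have "\<dots> = \<delta>" using c0 by simp
        finally have 1: "onorm (\<lambda>x. f a x - f a0 x) < \<delta>" .
        have "onorm (\<lambda>x. f a x - T0 x) = onorm (\<lambda>x. (f a x - f a0 x) + (f a0 x - T0 x))" by simp
        also have "\<dots> \<le> onorm (\<lambda>x. f a x - f a0 x) + onorm (\<lambda>x. f a0 x - T0 x)"
          by (rule onorm_triangle) (intro bounded_linear_sub blf)+
        also have "\<dots> < r" using 1 by (simp add: \<delta>_def)
        finally show "a \<in> {a \<in> topspace X. f a \<in> s}" using aX s by simp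
      qed
      then show "\<exists>T. openin X T \<and> a0 \<in> T \<and> T \<subseteq> {a \<in> topspace X. f a \<in> s}"
        using Nopen a0N by blast
    qed
  qed
  have gen: "openin X {a \<in> topspace X. f a \<in> U}" if "generate_topology_on G2 U" for U
    using that
  proof (induction rule: generate_topology_on.induct)
    case Empty then show ?case by simp
  next
    case (Int a b)
    have "{x \<in> topspace X. f x \<in> a \<inter> b} = {x \<in> topspace X. f x \<in> a} \<inter> {x \<in> topspace X. f x \<in> b}" by auto
    then show ?case using Int by auto
  next
    case (UN K)
    have "{x \<in> topspace X. f x \<in> \<Union>K} = \<Union>((\<lambda>k. {x \<in> topspace X. f x \<in> k}) ` K)" by auto
    then show ?case using UN by auto
  next
    case (Basis s) then show ?case by (rule basis)
  qed
  have top: "f a \<in> \<Union>G2" if "a \<in> topspace X" for a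
  proof -
    have "{T. onorm (\<lambda>x. T x - f a x) < 1} \<in> G2" unfolding G2_def using bf[OF that] by blast
    moreover have "f a \<in> {T. onorm (\<lambda>x. T x - f a x) < 1}" by (simp add: onorm_zero)
    ultimately show ?thesis by blast
  qed
  have "continuous_map X (topology_generated_by G2) f"
    unfolding continuous_map_def using top gen by (auto simp: openin_topology_generated_by_iff)
  then show ?thesis
    unfolding opnorm_topology_def continuous_map_in_subtopology G2_def[symmetric] f_def[symmetric]
    using bf by auto
qed


lemma scaleC_bounded_linear: "bounded_linear (\<lambda>x::'a::complex_inner. c *\<^sub>C x)"
proof (rule bounded_linear_intro[where K="cmod c"])
  fix x y :: 'a and r :: real
  show "c *\<^sub>C (x + y) = c *\<^sub>C x + c *\<^sub>C y" by (rule scaleC_add_right)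
  show "c *\<^sub>C (r *\<^sub>R x) = r *\<^sub>R (c *\<^sub>C x)" by (simp add: scaleR_scaleC scaleC_scaleC mult.commute)
  show "norm (c *\<^sub>C x) \<le> norm x * cmod c" by (simp add: norm_scaleC mult.commute)
qed

lemma scaleC_continuous: "continuous_on UNIV (\<lambda>x::'a::complex_inner. c *\<^sub>C x)"
  by (rule linear_continuous_on[OF scaleC_bounded_linear])

lemma dense_additive:
  fixes g :: "'a::real_normed_vector \<Rightarrow> 'b::real_normed_vector"
  assumes gc: "continuous_on UNIV g" and dense: "closure D = UNIV"
    and Dadd: "\<And>x y. x \<in> D \<Longrightarrow> y \<in> D \<Longrightarrow> x + y \<in> D"
    and add: "\<And>x y. x \<in> D \<Longrightarrow> y \<in> D \<Longrightarrow> g (x + y) = g x + g y"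
  shows "g (x + y) = g x + g y"
proof -
  have c1: "continuous_on UNIV (\<lambda>y. g (u + y))" for u
    by (rule continuous_on_compose2[OF gc]) (auto intro!: continuous_intros)
  have c2: "continuous_on UNIV (\<lambda>y. g u + g y)" for u
    by (intro continuous_intros gc)
  have c3: "continuous_on UNIV (\<lambda>u. g (u + y))" for y
    by (rule continuous_on_compose2[OF gc]) (auto intro!: continuous_intros)
  have c4: "continuous_on UNIV (\<lambda>u. g u + g y)" for y
    by (intro continuous_intros gc)
  have step1: "g (u + y) = g u + g y" if u: "u \<in> D" for u y
  proof (rule dense_agree[OF c1[of u] c2[of u] dense])
    fix x assume "x \<in> D" then show "g (u + x) = g u + g x" using u add by blast
  qed
  show ?thesis
  proof (rule dense_agree[OF c3[of y] c4[of y] dense])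
    fix u assume "u \<in> D" then show "g (u + y) = g u + g y" by (rule step1)
  qed
qed

lemma dense_scaleC_hom_complex:
  fixes g :: "'a::complex_inner \<Rightarrow> complex"
  assumes gc: "continuous_on UNIV g" and dense: "closure D = UNIV"
    and h: "\<And>x. x \<in> D \<Longrightarrow> g (c *\<^sub>C x) = c * g x"
  shows "g (c *\<^sub>C x) = c * g x"
proof -
  have c1: "continuous_on UNIV (\<lambda>x. g (c *\<^sub>C x))"
    by (rule continuous_on_compose2[OF gc scaleC_continuous]) auto
  have c2: "continuous_on UNIV (\<lambda>x. c * g x)" by (intro continuous_intros gc)
  show ?thesis by (rule dense_agree[OF c1 c2 dense]) (rule h)
qed

lemma dense_scaleC_hom:
  fixes g :: "'a::complex_inner \<Rightarrow> 'b::complex_inner"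
  assumes gc: "continuous_on UNIV g" and dense: "closure D = UNIV"
    and h: "\<And>x. x \<in> D \<Longrightarrow> g (c *\<^sub>C x) = c *\<^sub>C g x"
  shows "g (c *\<^sub>C x) = c *\<^sub>C g x"
proof -
  have c1: "continuous_on UNIV (\<lambda>x. g (c *\<^sub>C x))"
    by (rule continuous_on_compose2[OF gc scaleC_continuous]) auto
  have c2: "continuous_on UNIV (\<lambda>x. c *\<^sub>C g x)"
    by (rule continuous_on_compose2[OF scaleC_continuous gc]) auto
  show ?thesis by (rule dense_agree[OF c1 c2 dense]) (rule h)
qed

lemma cinner_dense_unique:
  fixes z z' :: "'a::complex_inner"
  assumes "closure D = UNIV" "\<And>y. y \<in> D \<Longrightarrow> cinner z y = cinner z' y"
  shows "z = z'"
proof -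
  have "z - z' = 0"
    by (rule cinner_dense_zero[OF assms(1)]) (simp add: cinner_diff_left assms(2))
  then show ?thesis by simp
qed

lemma form_operator:
  fixes B :: "'k::chilbert_space \<Rightarrow> 'k \<Rightarrow> complex" and D :: "'k set" and C :: real
  assumes dense: "closure D = UNIV" and C0: "0 \<le> C"
    and Dadd: "\<And>x y. x\<in>D \<Longrightarrow> y\<in>D \<Longrightarrow> x + y \<in> D" and Dsc: "\<And>c x. x\<in>D \<Longrightarrow> c *\<^sub>C x \<in> D"
    and Badd1: "\<And>x x' y. x\<in>D \<Longrightarrow> x'\<in>D \<Longrightarrow> y\<in>D \<Longrightarrow> B (x + x') y = B x y + B x' y"
    and Bsc1: "\<And>c x y. x\<in>D \<Longrightarrow> y\<in>D \<Longrightarrow> B (c *\<^sub>C x) y = c * B x y"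
    and Badd2: "\<And>x y y'. x\<in>D \<Longrightarrow> y\<in>D \<Longrightarrow> y'\<in>D \<Longrightarrow> B x (y + y') = B x y + B x y'"
    and Bsc2: "\<And>c x y. x\<in>D \<Longrightarrow> y\<in>D \<Longrightarrow> B x (c *\<^sub>C y) = cnj c * B x y"
    and Bbd: "\<And>x y. x\<in>D \<Longrightarrow> y\<in>D \<Longrightarrow> cmod (B x y) \<le> C * norm x * norm y"
  shows "\<exists>T. bounded_clinear T \<and> (\<forall>x\<in>D. \<forall>y\<in>D. cinner (T x) y = B x y)"
proof -
  have Dne: "D \<noteq> {}" using dense by auto
  have D0: "0 \<in> D" using Dne Dsc[of _ 0] by auto
  have Ddiff: "x - y \<in> D" if "x \<in> D" "y \<in> D" for x y
    using Dadd[OF that(1) Dsc[OF that(2), of "-1"]] by (simp add: scaleC_minus_left scaleC_one)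
  have minus1: "x - y = x + (-1) *\<^sub>C y" for x y :: 'k by (simp add: scaleC_minus_left scaleC_one)
  have Bdiff2: "B x (y - y') = B x y - B x y'" if "x\<in>D" "y\<in>D" "y'\<in>D" for x y y'
    unfolding minus1 using that by (simp add: Badd2 Bsc2 Dsc)
  have Bdiff1: "B (x - x') y = B x y - B x' y" if "x\<in>D" "x'\<in>D" "y\<in>D" for x x' y
    unfolding minus1 using that by (simp add: Badd1 Bsc1 Dsc)
  have rep: "\<exists>z. \<forall>y\<in>D. B x y = cinner z y" if xD: "x \<in> D" for x
  proof -
    define f where "f y = cnj (B x y)" for y
    have lip: "(C * norm x)-lipschitz_on D f"
    proof (rule lipschitz_onI)
      fix y y' assume yy: "y \<in> D" "y' \<in> D"
      have "dist (f y) (f y') = cmod (B x (y - y'))"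
        unfolding f_def dist_norm using yy xD by (simp add: Bdiff2 flip: complex_cnj_diff)
      also have "\<dots> \<le> C * norm x * norm (y - y')" by (rule Bbd[OF xD Ddiff[OF yy]])
      finally show "dist (f y) (f y') \<le> C * norm x * dist y y'" by (simp add: dist_norm)
    qed (use C0 in simp)
    obtain g where g: "(C * norm x)-lipschitz_on (closure D) g" "\<forall>y\<in>D. g y = f y"
      using lipschitz_extend_closure[OF lip] by blast
    have gc: "continuous_on UNIV g" using lipschitz_on_continuous_on[OF g(1)] dense by simp
    have fadd: "f (y + y') = f y + f y'" if "y \<in> D" "y' \<in> D" for y y'
      using that xD by (simp add: f_def Badd2)
    have gadd: "g (y + y') = g y + g y'" for y y'
      by (rule dense_additive[OF gc dense Dadd]) (simp_all add: g(2) Dadd fadd)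
    have ghom: "g (c *\<^sub>C y) = c * g y" for c y
      by (rule dense_scaleC_hom_complex[OF gc dense]) (simp add: g(2) Dsc f_def Bsc2 xD)
    have g0: "g 0 = 0" using ghom[of 0 0] by simp
    have gb: "norm (g y) \<le> norm y * (C * norm x)" for y
    proof -
      have "dist (g y) (g 0) \<le> C * norm x * dist y 0"
        by (rule lipschitz_onD[OF g(1)]) (simp_all add: dense)
      then show ?thesis by (simp add: g0 mult.commute)
    qed
    have bl: "bounded_linear g"
      by (rule bounded_linear_intro[OF gadd _ gb]) (simp add: scaleR_scaleC ghom scaleR_conv_of_real)
    obtain z where z: "\<And>y. g y = cinner y z" using riesz[OF bl ghom] by blast
    show ?thesis
    proof (intro exI ballI)
      fix y assume "y \<in> D"
      then have "cnj (B x y) = cinner y z" using g(2) z by (simp add: f_def)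
      then show "B x y = cinner z y" by (metis cinner_cnj complex_cnj_cnj)
    qed
  qed
  define S where "S x = (SOME z. \<forall>y\<in>D. B x y = cinner z y)" for x
  have S: "B x y = cinner (S x) y" if "x \<in> D" "y \<in> D" for x y
    using someI_ex[OF rep[OF that(1)]] that(2) unfolding S_def by blast
  have Sdiff: "S (x - x') = S x - S x'" if "x \<in> D" "x' \<in> D" for x x'
    by (rule cinner_dense_unique[OF dense])
       (simp add: that Ddiff cinner_diff_left S[symmetric] Bdiff1)
  have Sbd: "norm (S x) \<le> C * norm x" if xD: "x \<in> D" for x
  proof -
    have "closed {y. cmod (cinner (S x) y) \<le> C * norm x * norm y}"
      by (rule closed_Collect_le[OF continuous_on_norm[OF continuous_cinner_right]]) (intro continuous_intros)
    moreover have "D \<subseteq> {y. cmod (cinner (S x) y) \<le> C * norm x * norm y}"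
      using Bbd xD S by auto
    ultimately have "closure D \<subseteq> {y. cmod (cinner (S x) y) \<le> C * norm x * norm y}"
      by (rule closure_minimal[rotated])
    then have "cmod (cinner (S x) (S x)) \<le> C * norm x * norm (S x)" using dense by auto
    moreover have "cmod (cinner (S x) (S x)) = norm (S x) * norm (S x)"
      unfolding cinner_self_eq norm_of_real by (simp add: power2_eq_square)
    ultimately have "norm (S x) * norm (S x) \<le> C * norm x * norm (S x)" by simp
    then show ?thesis by (cases "S x = 0") (use C0 in auto)
  qed
  have lipS: "C-lipschitz_on D S"
  proof (rule lipschitz_onI)
    fix x x' assume "x \<in> D" "x' \<in> D"
    then show "dist (S x) (S x') \<le> C * dist x x'"
      by (simp add: dist_norm Sdiff[symmetric] Sbd Ddiff)
  qed (rule C0)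
  obtain T where T: "C-lipschitz_on (closure D) T" "\<forall>x\<in>D. T x = S x"
    using lipschitz_extend_closure[OF lipS] by blast
  have Tc: "continuous_on UNIV T" using lipschitz_on_continuous_on[OF T(1)] dense by simp
  have Sadd: "S (x + x') = S x + S x'" if "x \<in> D" "x' \<in> D" for x x'
    by (rule cinner_dense_unique[OF dense])
       (simp add: that Dadd cinner_add_left S[symmetric] Badd1)
  have Ssc: "S (c *\<^sub>C x) = c *\<^sub>C S x" if "x \<in> D" for c x
    by (rule cinner_dense_unique[OF dense])
       (simp add: that Dsc cinner_scaleC_left S[symmetric] Bsc1)
  have Tadd: "T (x + y) = T x + T y" for x y
    by (rule dense_additive[OF Tc dense Dadd]) (simp_all add: T(2) Dadd Sadd)
  have Thom: "T (c *\<^sub>C x) = c *\<^sub>C T x" for c x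
    by (rule dense_scaleC_hom[OF Tc dense]) (simp add: T(2) Dsc Ssc)
  have T0: "T 0 = 0" using Thom[of 0 0] by simp
  have Tb: "norm (T x) \<le> norm x * C" for x
  proof -
    have "dist (T x) (T 0) \<le> C * dist x 0"
      by (rule lipschitz_onD[OF T(1)]) (simp_all add: dense)
    then show ?thesis by (simp add: T0 mult.commute)
  qed
  have "bounded_clinear T" by (rule bounded_clinear_intro[OF Tadd Thom Tb])
  moreover have "\<forall>x\<in>D. \<forall>y\<in>D. cinner (T x) y = B x y" using T(2) S by simp
  ultimately show ?thesis by blast
qed


lemma astar_one: "astar (1::'a::complex_star_algebra) = 1"
proof -
  have "astar (1::'a) = astar 1 * 1" by simp
  also have "\<dots> = astar 1 * astar (astar 1)" by (simp only: astar_astar)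
  also have "\<dots> = astar (astar 1 * 1)" by (simp only: astar_mult)
  also have "\<dots> = 1" by (simp only: mult_1_right astar_astar)
  finally show ?thesis .
qed

lemma astar_zero: "astar (0::'a::complex_star_algebra) = 0"
  using astar_scaleC[of 0 "0::'a"] by simp

lemma twice_eq_zero: "(z::'a::complex_vector_space) = 2 *\<^sub>C z \<Longrightarrow> z = 0"
proof -
  assume a: "z = 2 *\<^sub>C z"
  have "2 *\<^sub>C z = z + z" using scaleC_add_left[of 1 1 z] by (simp add: scaleC_one)
  then have "z = z + z" using a by simp
  then show "z = 0" by simp
qed

lemma cspan_cinner_zero:
  fixes x :: "'a::complex_inner"
  assumes "y \<in> cspan G" "\<And>g. g \<in> G \<Longrightarrow> cinner x g = 0"
  shows "cinner x y = 0"
proof -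
  obtain F c where "finite F" "F \<subseteq> G" "y = (\<Sum>v\<in>F. c v *\<^sub>C v)" using assms(1) by (auto simp: cspan_def)
  then show ?thesis using assms(2) by (auto simp: cinner_sum_right cinner_scaleC_right intro!: sum.neutral)
qed

lemma closure_cinner_zero:
  fixes x :: "'a::complex_inner"
  assumes "y \<in> closure A" "\<And>g. g \<in> A \<Longrightarrow> cinner x g = 0"
  shows "cinner x y = 0"
proof -
  have "closed {y. cinner x y = 0}" by (rule closed_Collect_eq[OF continuous_cinner_right continuous_on_const])
  moreover have "A \<subseteq> {y. cinner x y = 0}" using assms(2) by auto
  ultimately have "closure A \<subseteq> {y. cinner x y = 0}" by (rule closure_minimal[rotated])
  then show ?thesis using assms(1) by auto
qed

locale stine =
  fixes S :: "('a::complex_star_algebra \<Rightarrow> real) set" and n :: nat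
    and \<rho> :: "nat \<Rightarrow> nat \<Rightarrow> 'a \<Rightarrow> ('h::chilbert_space \<Rightarrow> 'h)"
    and \<Phi> :: "'a \<Rightarrow> ('k::chilbert_space \<Rightarrow> 'k)" and V :: "nat \<Rightarrow> 'h \<Rightarrow> 'k"
  assumes rhoC: "\<rho> \<in> CPn_I S n" and st: "stinespring_rep S n \<rho> \<Phi> V"
begin

lemma rep: "representation S \<Phi>" using st by (simp add: stinespring_rep_def)
lemma Vb: "i < n \<Longrightarrow> bounded_clinear (V i)" using st by (simp add: stinespring_rep_def)
lemma rhoV: "i < n \<Longrightarrow> j < n \<Longrightarrow> \<rho> i j a = cadjoint (V i) \<circ> \<Phi> a \<circ> V j"
  using st by (simp add: stinespring_rep_def)
lemma dense: "closure (cspan {\<Phi> a (V i \<xi>) | a i \<xi>. i < n}) = UNIV"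
  using st by (simp add: stinespring_rep_def)
lemma Phi_cont: "continuous_op_map S \<Phi>" using rep by (simp add: representation_def)
lemma Phi_add: "\<Phi> (a + b) = (\<lambda>x. \<Phi> a x + \<Phi> b x)" using Phi_cont by (simp add: continuous_op_map_def)
lemma Phi_sc: "\<Phi> (c *\<^sub>C a) = (\<lambda>x. c *\<^sub>C \<Phi> a x)" using Phi_cont by (simp add: continuous_op_map_def)
lemma Phi_mult: "\<Phi> (a * b) = \<Phi> a \<circ> \<Phi> b" using rep by (simp add: representation_def)
lemma Phi_star: "\<Phi> (astar a) = cadjoint (\<Phi> a)" using rep by (simp add: representation_def)
lemma Phi_zero: "\<Phi> 0 = (\<lambda>x. 0)" using Phi_sc[of 0 0] by simp

lemma Phi_adj: "is_adj (\<Phi> a) (\<Phi> (astar a))"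
proof -
  have ex: "\<exists>T. is_adj (\<Phi> a) T"
  proof (rule ccontr)
    assume no: "\<not> (\<exists>T. is_adj (\<Phi> a) T)"
    have no2: "\<not> (\<exists>T. is_adj (\<Phi> (2 *\<^sub>C a)) T)"
    proof
      assume "\<exists>T. is_adj (\<Phi> (2 *\<^sub>C a)) T"
      then obtain T where T: "is_adj (\<Phi> (2 *\<^sub>C a)) T" by blast
      have "is_adj (\<Phi> a) (\<lambda>y. (1/2) *\<^sub>C T y)"
        unfolding is_adj_def
      proof (intro allI)
        fix x y
        have "cinner (\<Phi> a x) y = (1/2) * cinner (\<Phi> (2 *\<^sub>C a) x) y"
          by (simp add: Phi_sc cinner_scaleC_left)
        also have "\<dots> = (1/2) * cinner x (T y)" using T by (simp add: is_adj_def)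
        also have "\<dots> = cinner x ((1/2) *\<^sub>C T y)" by (simp add: cinner_scaleC_right)
        finally show "cinner (\<Phi> a x) y = cinner x ((1/2) *\<^sub>C T y)" .
      qed
      then show False using no by blast
    qed
    have P1: "(\<lambda>T. \<forall>x y. cinner (\<Phi> a x) y = cinner x (T y)) = (\<lambda>T. False)"
      using no by (auto simp: is_adj_def fun_eq_iff)
    have P2: "(\<lambda>T. \<forall>x y. cinner (\<Phi> (2 *\<^sub>C a) x) y = cinner x (T y)) = (\<lambda>T. False)"
      using no2 by (auto simp: is_adj_def fun_eq_iff)
    have eqc: "cadjoint (\<Phi> a) = cadjoint (\<Phi> (2 *\<^sub>C a))"
      unfolding cadjoint_def P1 P2 ..
    have "\<Phi> (astar a) = \<Phi> (astar (2 *\<^sub>C a))" unfolding Phi_star by (rule eqc)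
    also have "astar (2 *\<^sub>C a) = 2 *\<^sub>C astar a" by (simp add: astar_scaleC)
    also have "\<Phi> (2 *\<^sub>C astar a) = (\<lambda>x. 2 *\<^sub>C \<Phi> (astar a) x)" by (rule Phi_sc)
    finally have h: "\<Phi> (astar a) = (\<lambda>x. 2 *\<^sub>C \<Phi> (astar a) x)" .
    have z: "\<Phi> (astar a) = (\<lambda>x. 0)"
    proof
      fix x show "\<Phi> (astar a) x = 0"
        by (rule twice_eq_zero) (rule fun_cong[OF h, of x, simplified])
    qed
    have "is_adj (\<lambda>x::'k. 0::'k) (\<lambda>x. 0)" by (simp add: is_adj_def)
    then have "cadjoint (\<lambda>x::'k. 0::'k) = (\<lambda>x. 0)" by (rule is_adj_unique)
    then have "\<Phi> a = (\<lambda>x. 0)" using Phi_star[of "astar a"] z by (simp add: astar_astar)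
    then have "is_adj (\<Phi> a) (\<lambda>x. 0)" by (simp add: is_adj_def)
    then show False using no by blast
  qed
  then obtain T where T: "is_adj (\<Phi> a) T" by blast
  then have "cadjoint (\<Phi> a) = T" by (rule is_adj_unique)
  then have "\<Phi> (astar a) = T" by (simp add: Phi_star)
  then show ?thesis using T by simp
qed

lemma Phi_adjD: "cinner (\<Phi> a x) y = cinner x (\<Phi> (astar a) y)"
  using Phi_adj is_adjD by blast
lemma Phi_adjD2: "cinner x (\<Phi> a y) = cinner (\<Phi> (astar a) x) y"
  using Phi_adjD[of "astar a"] by (simp add: astar_astar)

lemma Phi_clinear: "clinear (\<Phi> a)" using Phi_adj is_adj_clinear_left by blast

lemma Phi_sum: "\<Phi> (\<Sum>l\<in>L. f l) = (\<lambda>x. \<Sum>l\<in>L. \<Phi> (f l) x)"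
  by (induction L rule: infinite_finite_induct) (auto simp: Phi_zero Phi_add)

definition Vs where "Vs i = cadjoint (V i)"

lemma V_adj: "i < n \<Longrightarrow> is_adj (V i) (Vs i)" unfolding Vs_def by (rule adj_exists[OF Vb])
lemma V_adjD: "i < n \<Longrightarrow> cinner (V i x) y = cinner x (Vs i y)" using V_adj is_adjD by blast
lemma V_adjD2: "i < n \<Longrightarrow> cinner (Vs i y) x = cinner y (V i x)" using V_adj is_adj_sym is_adjD by blast
lemma Vs_b: "i < n \<Longrightarrow> bounded_clinear (Vs i)" unfolding Vs_def by (rule cadjoint_bounded[OF Vb])
lemma Vs_cl: "i < n \<Longrightarrow> clinear (Vs i)" using Vs_b bounded_clinear_clinear by blast
lemma V_cl: "i < n \<Longrightarrow> clinear (V i)" using Vb bounded_clinear_clinear by blast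
lemma rho_diag: "i < n \<Longrightarrow> \<rho> i i 1 = id" using rhoC by (simp add: CPn_I_def)
lemma rho_up: "i < j \<Longrightarrow> j < n \<Longrightarrow> \<rho> i j 1 = (\<lambda>x. 0)" using rhoC by (simp add: CPn_I_def)
lemma rho_out: "n \<le> i \<or> n \<le> j \<Longrightarrow> \<rho> i j = (\<lambda>a x. 0)"
proof -
  assume a: "n \<le> i \<or> n \<le> j"
  have "\<forall>i j. (n \<le> i \<or> n \<le> j) \<longrightarrow> \<rho> i j = (\<lambda>a x. 0)" using rhoC unfolding CPn_I_def by blast
  then show ?thesis using a by blast
qed
lemma rhoVs: "i < n \<Longrightarrow> j < n \<Longrightarrow> \<rho> i j a x = Vs i (\<Phi> a (V j x))"
  using rhoV by (simp add: Vs_def)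

lemma dense0:
  assumes "\<And>a i \<xi>. i < n \<Longrightarrow> cinner x (\<Phi> a (V i \<xi>)) = 0"
  shows "x = 0"
proof (rule cinner_dense_zero[OF dense])
  fix d assume "d \<in> cspan {\<Phi> a (V i \<xi>) | a i \<xi>. i < n}"
  then show "cinner x d = 0" by (rule cspan_cinner_zero) (auto simp: assms)
qed

lemma Phi_one: "\<Phi> 1 = (\<lambda>x. x)"
proof
  fix x
  have "\<Phi> 1 x - x = 0"
  proof (rule dense0)
    fix a i \<xi> assume "i < n"
    have "cinner (\<Phi> 1 x) (\<Phi> a (V i \<xi>)) = cinner x (\<Phi> 1 (\<Phi> a (V i \<xi>)))"
      using Phi_adjD[of 1] by (simp add: astar_one)
    also have "\<Phi> 1 (\<Phi> a (V i \<xi>)) = \<Phi> a (V i \<xi>)" using Phi_mult[of 1 a] by (simp add: fun_eq_iff)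
    finally show "cinner (\<Phi> 1 x - x) (\<Phi> a (V i \<xi>)) = 0" by (simp add: cinner_diff_left)
  qed
  then show "\<Phi> 1 x = x" by simp
qed

lemma VsV: assumes "i < n" "j < n" shows "Vs i (V j \<xi>) = (if i = j then \<xi> else 0)"
proof -
  have ij: "Vs i (V j \<xi>) = (if i = j then \<xi> else 0)" if "i < n" "j < n" "i \<le> j" for i j \<xi>
  proof -
    have "Vs i (V j \<xi>) = \<rho> i j 1 \<xi>" using that by (simp add: rhoVs Phi_one)
    then show ?thesis using rho_diag[of i] rho_up[of i j] that by (cases "i = j") auto
  qed
  show ?thesis
  proof (cases "i \<le> j")
    case True then show ?thesis using ij assms by blast
  next
    case False
    have "Vs i (V j \<xi>) = 0"
    proof (rule cinner_ext_left)
      fix z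
      have "cinner (Vs i (V j \<xi>)) z = cinner (V j \<xi>) (V i z)" by (rule V_adjD2[OF assms(1)])
      also have "\<dots> = cinner \<xi> (Vs j (V i z))" by (rule V_adjD[OF assms(2)])
      also have "Vs j (V i z) = 0" using ij[of j i z] assms False by simp
      finally show "cinner (Vs i (V j \<xi>)) z = cinner 0 z" by simp
    qed
    then show ?thesis using False by simp
  qed
qed

end


lemma cspan_zero: "0 \<in> cspan G"
  unfolding cspan_def by (rule CollectI, rule exI[of _ "{}"]) simp

lemma cspan_gen: "g \<in> G \<Longrightarrow> g \<in> cspan G"
  unfolding cspan_def by (rule CollectI, rule exI[of _ "{g}"], rule exI[of _ "\<lambda>_. 1"]) (simp add: scaleC_one)

lemma cspan_add:
  assumes "x \<in> cspan G" "y \<in> cspan G" shows "x + y \<in> cspan G"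
proof -
  obtain F c where F: "finite F" "F \<subseteq> G" "x = (\<Sum>v\<in>F. c v *\<^sub>C v)" using assms(1) by (auto simp: cspan_def)
  obtain H d where H: "finite H" "H \<subseteq> G" "y = (\<Sum>v\<in>H. d v *\<^sub>C v)" using assms(2) by (auto simp: cspan_def)
  define e where "e v = (if v \<in> F then c v else 0) + (if v \<in> H then d v else 0)" for v
  have 1: "(\<Sum>v\<in>F \<union> H. (if v \<in> F then c v else 0) *\<^sub>C v) = (\<Sum>v\<in>F. c v *\<^sub>C v)"
    by (rule sum.mono_neutral_cong_right) (use F H in auto)
  have 2: "(\<Sum>v\<in>F \<union> H. (if v \<in> H then d v else 0) *\<^sub>C v) = (\<Sum>v\<in>H. d v *\<^sub>C v)"
    by (rule sum.mono_neutral_cong_right) (use F H in auto)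
  have "x + y = (\<Sum>v\<in>F \<union> H. e v *\<^sub>C v)"
    unfolding e_def scaleC_add_left sum.distrib 1 2 F(3) H(3) ..
  then show ?thesis unfolding cspan_def using F H by blast
qed

lemma cspan_sum: "(\<And>i. i \<in> A \<Longrightarrow> f i \<in> cspan G) \<Longrightarrow> (\<Sum>i\<in>A. f i) \<in> cspan G"
  by (induction A rule: infinite_finite_induct) (auto simp: cspan_zero cspan_add)

context stine begin

definition P where "P x = (\<Sum>i<n. V i (Vs i x))"
definition M where "M = closure (cspan {V i \<xi> | i \<xi>. i < n})"

lemma P_in: "P x \<in> M"
proof -
  have "P x \<in> cspan {V i \<xi> | i \<xi>. i < n}"
    unfolding P_def by (rule cspan_sum) (auto intro: cspan_gen)
  then show ?thesis unfolding M_def using closure_subset by blast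
qed

lemma P_orth_gen: "j < n \<Longrightarrow> cinner (x - P x) (V j \<xi>) = 0"
proof -
  assume j: "j < n"
  have "cinner (P x) (V j \<xi>) = (\<Sum>i<n. cinner (V i (Vs i x)) (V j \<xi>))" by (simp add: P_def cinner_sum_left)
  also have "\<dots> = (\<Sum>i<n. if i = j then cinner (Vs j x) \<xi> else 0)"
    by (rule sum.cong) (auto simp: V_adjD j VsV)
  also have "\<dots> = cinner (Vs j x) \<xi>" using j by simp
  also have "\<dots> = cinner x (V j \<xi>)" by (rule V_adjD2[OF j])
  finally show ?thesis by (simp add: cinner_diff_left)
qed

lemma P_orth: "m \<in> M \<Longrightarrow> cinner (x - P x) m = 0"
  unfolding M_def
  by (erule closure_cinner_zero, erule cspan_cinner_zero) (auto simp: P_orth_gen)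

lemma orthP: "orth_proj M = P"
proof
  fix x
  show "orth_proj M x = P x"
    unfolding orth_proj_def
  proof (rule the_equality)
    show "P x \<in> M \<and> (\<forall>z\<in>M. cinner (x - P x) z = 0)" using P_in P_orth by blast
  next
    fix y assume y: "y \<in> M \<and> (\<forall>z\<in>M. cinner (x - y) z = 0)"
    have a: "cinner (x - y) y = 0" "cinner (x - y) (P x) = 0" using y P_in by auto
    have b: "cinner (x - P x) y = 0" "cinner (x - P x) (P x) = 0" using y P_in P_orth by auto
    have "cinner (P x - y) (P x - y) = cinner ((x - y) - (x - P x)) (P x - y)" by simp
    also have "\<dots> = 0" using a b by (simp add: cinner_diff_left cinner_diff_right)
    finally show "y = P x" using cinner_self_zero[of "P x - y"] by simp
  qed
qed

lemma P_adj: "is_adj P P"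
  unfolding is_adj_def
proof (intro allI)
  fix x y
  have "cinner (P x) y = (\<Sum>i<n. cinner (Vs i x) (Vs i y))"
    by (simp add: P_def cinner_sum_left V_adjD)
  also have "\<dots> = cinner x (P y)"
    by (simp add: P_def cinner_sum_right V_adjD2)
  finally show "cinner (P x) y = cinner x (P y)" .
qed

lemma P_V: "j < n \<Longrightarrow> P (V j \<xi>) = V j \<xi>"
proof -
  assume j: "j < n"
  have "P (V j \<xi>) = (\<Sum>i<n. if i = j then V j \<xi> else 0)"
    unfolding P_def by (rule sum.cong) (auto simp: VsV j clinear_zero[OF V_cl])
  then show ?thesis using j by simp
qed

lemma compress_eq_imp:
  assumes eq: "P \<circ> T1 \<circ> P = P \<circ> T2 \<circ> P" and ij: "i < n" "j < n"
  shows "Vs i (T1 (V j \<xi>)) = Vs i (T2 (V j \<xi>))"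
proof (rule cinner_ext_left)
  fix z
  have key: "cinner (Vs i (T (V j \<xi>))) z = cinner (P (T (P (V j \<xi>)))) (V i z)" for T
  proof -
    have "cinner (Vs i (T (V j \<xi>))) z = cinner (T (V j \<xi>)) (V i z)" by (rule V_adjD2[OF ij(1)])
    also have "\<dots> = cinner (T (P (V j \<xi>))) (P (V i z))" by (simp only: P_V ij)
    also have "\<dots> = cinner (P (T (P (V j \<xi>)))) (V i z)" by (simp only: is_adjD[OF P_adj] P_V ij)
    finally show ?thesis .
  qed
  have "P (T1 (P (V j \<xi>))) = P (T2 (P (V j \<xi>)))" using fun_cong[OF eq, of "V j \<xi>"] by simp
  then show "cinner (Vs i (T1 (V j \<xi>))) z = cinner (Vs i (T2 (V j \<xi>))) z" by (simp only: key)
qed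

lemma compress_id:
  assumes T: "clinear T" and h: "\<And>i j \<xi>. i < n \<Longrightarrow> j < n \<Longrightarrow> Vs i (T (V j \<xi>)) = Vs i (V j \<xi>)"
  shows "P \<circ> T \<circ> P = P \<circ> id \<circ> P"
proof
  fix x
  have "P (T (P x)) = (\<Sum>i<n. V i (\<Sum>j<n. Vs i (T (V j (Vs j x)))))"
    unfolding P_def by (simp add: clinear_sum[OF T] clinear_sum[OF Vs_cl])
  also have "\<dots> = (\<Sum>i<n. V i (\<Sum>j<n. Vs i (V j (Vs j x))))" by (simp add: h)
  also have "\<dots> = P (P x)"
    unfolding P_def by (simp add: clinear_sum[OF Vs_cl])
  finally show "(P \<circ> T \<circ> P) x = (P \<circ> id \<circ> P) x" by simp
qed

end

lemma clinear_scaleR: "clinear (f::'a::complex_inner \<Rightarrow> 'b::complex_inner) \<Longrightarrow> f (r *\<^sub>R x) = r *\<^sub>R f x"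
  by (simp add: scaleR_scaleC clinear_scaleC)

lemma bounded_clinear_add:
  assumes "bounded_clinear (f::'a::complex_inner \<Rightarrow> 'b::complex_inner)" "bounded_clinear g"
  shows "bounded_clinear (\<lambda>x. f x + g x)"
proof -
  have "clinear (\<lambda>x. f x + g x)" using assms
    by (auto simp: clinear_def bounded_clinear_def scaleC_add_right)
  moreover have "bounded_linear (\<lambda>x. f x + g x)" using assms
    by (intro bounded_linear_add) (simp_all add: bounded_clinear_bounded_linear)
  ultimately show ?thesis by (simp add: bounded_clinear_iff)
qed

lemma bounded_clinear_sub:
  assumes "bounded_clinear (f::'a::complex_inner \<Rightarrow> 'b::complex_inner)" "bounded_clinear g"
  shows "bounded_clinear (\<lambda>x. f x - g x)"
proof -
  have "clinear (\<lambda>x. f x - g x)" using assms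
    by (auto simp: clinear_def bounded_clinear_def scaleC_diff_right)
  moreover have "bounded_linear (\<lambda>x. f x - g x)" using assms
    by (intro bounded_linear_sub) (simp_all add: bounded_clinear_bounded_linear)
  ultimately show ?thesis by (simp add: bounded_clinear_iff)
qed

lemma bounded_clinear_scaleC:
  assumes "bounded_clinear (f::'a::complex_inner \<Rightarrow> 'b::complex_inner)"
  shows "bounded_clinear (\<lambda>x. c *\<^sub>C f x)"
proof -
  have "clinear (\<lambda>x. c *\<^sub>C f x)" using assms
    by (auto simp: clinear_def bounded_clinear_def scaleC_add_right scaleC_scaleC mult.commute)
  moreover have "bounded_linear (\<lambda>x. c *\<^sub>C f x)"
    using bounded_linear_compose[OF scaleC_bounded_linear bounded_clinear_bounded_linear[OF assms]] .
  ultimately show ?thesis by (simp add: bounded_clinear_iff)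
qed

lemma bounded_clinear_scaleR:
  assumes "bounded_clinear (f::'a::complex_inner \<Rightarrow> 'b::complex_inner)"
  shows "bounded_clinear (\<lambda>x. r *\<^sub>R f x)"
  using bounded_clinear_scaleC[OF assms, of "complex_of_real r"] by (simp add: scaleR_scaleC)

context stine begin

definition good :: "('k \<Rightarrow> 'k) \<Rightarrow> bool" where
  "good A \<longleftrightarrow> bounded_clinear A \<and> (\<forall>a x. A (\<Phi> a x) = \<Phi> a (A x)) \<and>
     (\<forall>i j \<xi>. i < n \<longrightarrow> j < n \<longrightarrow> Vs i (A (V j \<xi>)) = 0)"

definition th :: "real \<Rightarrow> ('k \<Rightarrow> 'k) \<Rightarrow> nat \<Rightarrow> nat \<Rightarrow> 'a \<Rightarrow> 'h \<Rightarrow> 'h" where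
  "th e A i j = (if i < n \<and> j < n then (\<lambda>a x. Vs i (\<Phi> a (V j x + e *\<^sub>R A (V j x)))) else (\<lambda>a x. 0))"

lemma Phi_cont_map: "continuous_map (seminorm_topology S) opnorm_topology \<Phi>"
  using Phi_cont by (simp add: continuous_op_map_def)

lemma th_cont:
  assumes g: "good A" and ij: "i < n" "j < n"
  shows "continuous_op_map S (th e A i j)"
proof -
  have Ab: "bounded_clinear A" using g by (simp add: good_def)
  define R where "R x = V j x + e *\<^sub>R A (V j x)" for x
  have Rb: "bounded_clinear R" unfolding R_def
    by (intro bounded_clinear_add bounded_clinear_scaleR Vb ij bounded_clinear_compose[OF Ab Vb, unfolded comp_def])
  have eq: "th e A i j = (\<lambda>a. Vs i \<circ> \<Phi> a \<circ> R)" using ij by (simp add: th_def R_def fun_eq_iff)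
  show ?thesis unfolding continuous_op_map_def eq
  proof (intro conjI allI)
    fix a b show "Vs i \<circ> \<Phi> (a + b) \<circ> R = (\<lambda>x. (Vs i \<circ> \<Phi> a \<circ> R) x + (Vs i \<circ> \<Phi> b \<circ> R) x)"
      by (simp add: Phi_add fun_eq_iff clinear_add[OF Vs_cl[OF ij(1)]])
  next
    fix c a show "Vs i \<circ> \<Phi> (c *\<^sub>C a) \<circ> R = (\<lambda>x. c *\<^sub>C (Vs i \<circ> \<Phi> a \<circ> R) x)"
      by (simp add: Phi_sc fun_eq_iff clinear_scaleC[OF Vs_cl[OF ij(1)]])
  next
    show "continuous_map (seminorm_topology S) opnorm_topology (\<lambda>a. Vs i \<circ> \<Phi> a \<circ> R)"
      by (rule cont_compose_op[OF Phi_cont_map Vs_b[OF ij(1)] Rb])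
  qed
qed

lemma Bop_pos:
  assumes sa: "is_adj A A" and K: "\<And>y. norm (A y) \<le> norm y * K" and eK: "\<bar>e\<bar> * K \<le> 1"
  shows "Im (cinner (y + e *\<^sub>R A y) y) = 0 \<and> 0 \<le> Re (cinner (y + e *\<^sub>R A y) y)"
proof -
  have real: "cnj (cinner (A y) y) = cinner (A y) y"
    using is_adjD[OF sa, of y y] cinner_cnj[of y "A y"] by simp
  then have im: "Im (cinner (A y) y) = 0" by (metis cnj.sel(2) neg_equal_zero)
  have eq: "cinner (y + e *\<^sub>R A y) y = complex_of_real ((norm y)\<^sup>2) + complex_of_real e * cinner (A y) y"
    by (simp add: cinner_add_left cinner_scaleR_left cinner_self_eq)
  have "\<bar>Re (cinner (A y) y)\<bar> \<le> cmod (cinner (A y) y)" by (rule abs_Re_le_cmod)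
  also have "\<dots> \<le> norm (A y) * norm y" by (rule cauchy_schwarz)
  also have "\<dots> \<le> norm y * K * norm y" by (rule mult_right_mono[OF K]) simp
  finally have b: "\<bar>Re (cinner (A y) y)\<bar> \<le> K * (norm y)\<^sup>2" by (simp add: power2_eq_square algebra_simps)
  have "\<bar>e * Re (cinner (A y) y)\<bar> \<le> \<bar>e\<bar> * (K * (norm y)\<^sup>2)"
    unfolding abs_mult by (rule mult_left_mono[OF b]) simp
  also have "\<dots> = (\<bar>e\<bar> * K) * (norm y)\<^sup>2" by simp
  also have "\<dots> \<le> 1 * (norm y)\<^sup>2" by (rule mult_right_mono[OF eK]) simp
  finally have "0 \<le> (norm y)\<^sup>2 + e * Re (cinner (A y) y)" by linarith
  then show ?thesis unfolding eq using im by simp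
qed

lemma th_term:
  assumes g: "good A" and pq: "snd p < n" "snd q < n"
    and X: "X = (\<Sum>l\<in>L. astar (Bm l p) * Bm l q)"
  shows "cinner (th e A (snd p) (snd q) X \<xi>q) \<xi>p =
     (\<Sum>l\<in>L. cinner (\<Phi> (Bm l q) (V (snd q) \<xi>q) + e *\<^sub>R A (\<Phi> (Bm l q) (V (snd q) \<xi>q)))
                     (\<Phi> (Bm l p) (V (snd p) \<xi>p)))"
proof -
  have comm: "\<And>a x. A (\<Phi> a x) = \<Phi> a (A x)" using g by (simp add: good_def)
  define w where "w = V (snd q) \<xi>q + e *\<^sub>R A (V (snd q) \<xi>q)"
  have "cinner (th e A (snd p) (snd q) X \<xi>q) \<xi>p = cinner (Vs (snd p) (\<Phi> X w)) \<xi>p"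
    using pq by (simp add: th_def w_def)
  also have "\<dots> = cinner (\<Phi> X w) (V (snd p) \<xi>p)" by (rule V_adjD2[OF pq(1)])
  also have "\<Phi> X w = (\<Sum>l\<in>L. \<Phi> (astar (Bm l p)) (\<Phi> (Bm l q) w))"
    unfolding X Phi_sum by (simp add: Phi_mult)
  also have "cinner (\<Sum>l\<in>L. \<Phi> (astar (Bm l p)) (\<Phi> (Bm l q) w)) (V (snd p) \<xi>p)
     = (\<Sum>l\<in>L. cinner (\<Phi> (Bm l q) w) (\<Phi> (Bm l p) (V (snd p) \<xi>p)))"
    unfolding cinner_sum_left by (rule sum.cong) (simp_all add: Phi_adjD astar_astar)
  also have "\<dots> = (\<Sum>l\<in>L. cinner (\<Phi> (Bm l q) (V (snd q) \<xi>q) + e *\<^sub>R A (\<Phi> (Bm l q) (V (snd q) \<xi>q)))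
                     (\<Phi> (Bm l p) (V (snd p) \<xi>p)))"
    by (rule sum.cong) (simp_all add: w_def clinear_add[OF Phi_clinear] clinear_scaleR[OF Phi_clinear] comm)
  finally show ?thesis .
qed

lemma th_pos:
  assumes g: "good A" and sa: "is_adj A A" and K: "\<And>y. norm (A y) \<le> norm y * K" and eK: "\<bar>e\<bar> * K \<le> 1"
    and pm: "pos_matrix ({..<(m::nat)} \<times> {..<n}) X"
  shows "pos_op_matrix ({..<m} \<times> {..<n}) (\<lambda>p q. th e A (snd p) (snd q) (X p q))"
proof -
  define I where "I = {..<m} \<times> {..<n}"
  obtain Bm where Bm: "\<And>p q. p \<in> I \<Longrightarrow> q \<in> I \<Longrightarrow> X p q = (\<Sum>l\<in>I. astar (Bm l p) * Bm l q)"
    using pm unfolding pos_matrix_def I_def by blast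
  have Ab: "bounded_clinear A" using g by (simp add: good_def)
  define Bop where "Bop y = y + e *\<^sub>R A y" for y
  have Bcl: "clinear Bop" unfolding Bop_def
    using bounded_clinear_add[OF bounded_clinear_ident bounded_clinear_scaleR[OF Ab, of e]]
    by (simp add: bounded_clinear_clinear)
  show ?thesis unfolding pos_op_matrix_def Let_def I_def[symmetric]
  proof (intro allI)
    fix \<xi> :: "nat \<times> nat \<Rightarrow> 'h"
    define u where "u (l::nat\<times>nat) (q::nat\<times>nat) = \<Phi> (Bm l q) (V (snd q) (\<xi> q))" for l q
    have "(\<Sum>p\<in>I. \<Sum>q\<in>I. cinner (th e A (snd p) (snd q) (X p q) (\<xi> q)) (\<xi> p))
        = (\<Sum>p\<in>I. \<Sum>q\<in>I. \<Sum>l\<in>I. cinner (Bop (u l q)) (u l p))"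
    proof (intro sum.cong refl)
      fix p q assume pq: "p \<in> I" "q \<in> I"
      then have "snd p < n" "snd q < n" by (auto simp: I_def)
      then show "cinner (th e A (snd p) (snd q) (X p q) (\<xi> q)) (\<xi> p) = (\<Sum>l\<in>I. cinner (Bop (u l q)) (u l p))"
        unfolding Bop_def u_def by (rule th_term[OF g _ _ Bm[OF pq]])
    qed
    also have "\<dots> = (\<Sum>p\<in>I. \<Sum>l\<in>I. \<Sum>q\<in>I. cinner (Bop (u l q)) (u l p))"
      by (intro sum.cong refl sum.swap)
    also have "\<dots> = (\<Sum>l\<in>I. \<Sum>p\<in>I. \<Sum>q\<in>I. cinner (Bop (u l q)) (u l p))"
      by (rule sum.swap)
    also have "\<dots> = (\<Sum>l\<in>I. cinner (Bop (\<Sum>q\<in>I. u l q)) (\<Sum>p\<in>I. u l p))"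
      by (simp add: clinear_sum[OF Bcl] cinner_sum_left cinner_sum_right)
    finally have eq: "(\<Sum>p\<in>I. \<Sum>q\<in>I. cinner (th e A (snd p) (snd q) (X p q) (\<xi> q)) (\<xi> p))
        = (\<Sum>l\<in>I. cinner (Bop (\<Sum>q\<in>I. u l q)) (\<Sum>p\<in>I. u l p))" .
    have pos: "Im (cinner (Bop y) y) = 0 \<and> 0 \<le> Re (cinner (Bop y) y)" for y
      unfolding Bop_def by (rule Bop_pos[OF sa K eK])
    show "Im (\<Sum>p\<in>I. \<Sum>q\<in>I. cinner (th e A (snd p) (snd q) (X p q) (\<xi> q)) (\<xi> p)) = 0 \<and>
          0 \<le> Re (\<Sum>p\<in>I. \<Sum>q\<in>I. cinner (th e A (snd p) (snd q) (X p q) (\<xi> q)) (\<xi> p))"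
      unfolding eq Im_sum Re_sum using pos by (simp add: sum_nonneg)
  qed
qed

lemma th_in:
  assumes g: "good A" and sa: "is_adj A A" and K: "\<And>y. norm (A y) \<le> norm y * K" and eK: "\<bar>e\<bar> * K \<le> 1"
  shows "th e A \<in> CPn_I S n"
proof -
  have gv: "\<And>i j \<xi>. i < n \<Longrightarrow> j < n \<Longrightarrow> Vs i (A (V j \<xi>)) = 0" using g by (simp add: good_def)
  have cnp: "completely_n_positive S n (th e A)"
    unfolding completely_n_positive_def
    using th_cont[OF g] th_pos[OF g sa K eK] by blast
  have out: "\<forall>i j. (n \<le> i \<or> n \<le> j) \<longrightarrow> th e A i j = (\<lambda>a x. 0)" by (auto simp: th_def)
  have one: "th e A i j 1 x = Vs i (V j x)" if "i < n" "j < n" for i j x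
    using that by (simp add: th_def Phi_one clinear_add[OF Vs_cl] clinear_scaleR[OF Vs_cl] gv)
  have diag: "\<forall>i<n. th e A i i 1 = id" by (auto simp: fun_eq_iff one VsV)
  have up: "\<forall>i j. i < j \<and> j < n \<longrightarrow> th e A i j 1 = (\<lambda>x. 0)" by (auto simp: fun_eq_iff one VsV)
  show ?thesis unfolding CPn_I_def using cnp out diag up by blast
qed

lemma th_avg:
  shows "\<rho> = (\<lambda>i j a x. (1/2) *\<^sub>R th e A i j a x + (1 - 1/2) *\<^sub>R th (-e) A i j a x)"
proof (intro ext)
  fix i j a x
  show "\<rho> i j a x = (1/2) *\<^sub>R th e A i j a x + (1 - 1/2) *\<^sub>R th (-e) A i j a x"
  proof (cases "i < n \<and> j < n")
    case True
    then have L: "clinear (Vs i \<circ> \<Phi> a)" by (intro clinear_compose Vs_cl Phi_clinear) simp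
    have "th e A i j a x = Vs i (\<Phi> a (V j x)) + e *\<^sub>R Vs i (\<Phi> a (A (V j x)))"
      using True clinear_add[OF L, of "V j x" "e *\<^sub>R A (V j x)"] clinear_scaleR[OF L, of e "A (V j x)"] by (simp add: th_def)
    moreover have "th (-e) A i j a x = Vs i (\<Phi> a (V j x)) + (-e) *\<^sub>R Vs i (\<Phi> a (A (V j x)))"
      using True clinear_add[OF L, of "V j x" "(-e) *\<^sub>R A (V j x)"] clinear_scaleR[OF L, of "-e" "A (V j x)"] by (simp add: th_def)
    moreover have "\<rho> i j a x = Vs i (\<Phi> a (V j x))" using True by (simp add: rhoVs)
    moreover have aux: "\<And>Y Z::'h. (1/2) *\<^sub>R (Y + e *\<^sub>R Z) + (1 - 1/2) *\<^sub>R (Y + (-e) *\<^sub>R Z) = Y"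
      by (simp add: algebra_simps flip: scaleR_add_left)
    ultimately show ?thesis by (simp only: aux)
  next
    case False
    then show ?thesis using rho_out[of i j] by (auto simp: th_def)
  qed
qed

lemma good_zero:
  assumes g: "good A" and sa: "is_adj A A" and h: "\<And>i j a \<xi>. i < n \<Longrightarrow> j < n \<Longrightarrow> Vs i (\<Phi> a (A (V j \<xi>))) = 0"
  shows "A x = 0"
proof -
  have comm: "\<And>a x. A (\<Phi> a x) = \<Phi> a (A x)" using g by (auto simp: good_def)
  have gen: "A (\<Phi> b (V j \<xi>)) = 0" if j: "j < n" for b j \<xi>
  proof (rule dense0)
    fix c i \<eta> assume i: "i < n"
    have "cinner (A (\<Phi> b (V j \<xi>))) (\<Phi> c (V i \<eta>)) = cinner (\<Phi> (astar c) (\<Phi> b (A (V j \<xi>)))) (V i \<eta>)"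
      by (simp add: comm Phi_adjD2)
    also have "\<dots> = cinner (Vs i (\<Phi> (astar c * b) (A (V j \<xi>)))) \<eta>"
      by (simp add: Phi_mult V_adjD2[OF i])
    also have "\<dots> = 0" using h[OF i j] by simp
    finally show "cinner (A (\<Phi> b (V j \<xi>))) (\<Phi> c (V i \<eta>)) = 0" .
  qed
  show ?thesis
  proof (rule dense0)
    fix a i \<xi> assume i: "i < n"
    have "cinner (A x) (\<Phi> a (V i \<xi>)) = cinner x (A (\<Phi> a (V i \<xi>)))" by (rule is_adjD[OF sa])
    then show "cinner (A x) (\<Phi> a (V i \<xi>)) = 0" using gen[OF i] by simp
  qed
qed

lemma th_neq:
  assumes g: "good A" and sa: "is_adj A A" and e: "e \<noteq> 0" and nz: "A x0 \<noteq> 0"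
  shows "th e A \<noteq> \<rho>"
proof
  assume eq: "th e A = \<rho>"
  have "Vs i (\<Phi> a (A (V j \<xi>))) = 0" if ij: "i < n" "j < n" for i j a \<xi>
  proof -
    have L: "clinear (Vs i \<circ> \<Phi> a)" using ij by (intro clinear_compose Vs_cl Phi_clinear) simp
    have "th e A i j a \<xi> = \<rho> i j a \<xi>" using eq by simp
    then have "Vs i (\<Phi> a (V j \<xi>)) + e *\<^sub>R Vs i (\<Phi> a (A (V j \<xi>))) = Vs i (\<Phi> a (V j \<xi>))"
      using ij clinear_add[OF L, of "V j \<xi>" "e *\<^sub>R A (V j \<xi>)"] clinear_scaleR[OF L, of e "A (V j \<xi>)"]
      by (simp add: th_def rhoVs)
    then have "e *\<^sub>R Vs i (\<Phi> a (A (V j \<xi>))) = 0" by simp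
    then show ?thesis using e by simp
  qed
  then have "A x0 = 0" by (intro good_zero[OF g sa]) blast
  then show False using nz by simp
qed

lemma good_diff:
  assumes "T1 \<in> commutant \<Phi>" "T2 \<in> commutant \<Phi>" "P \<circ> T1 \<circ> P = P \<circ> T2 \<circ> P"
  shows "good (\<lambda>x. T1 x - T2 x)"
proof -
  have b: "bounded_clinear T1" "bounded_clinear T2" and c: "T1 \<circ> \<Phi> a = \<Phi> a \<circ> T1" "T2 \<circ> \<Phi> a = \<Phi> a \<circ> T2" for a
    using assms by (auto simp: commutant_def)
  have "bounded_clinear (\<lambda>x. T1 x - T2 x)" by (rule bounded_clinear_sub[OF b])
  moreover have "T1 (\<Phi> a x) - T2 (\<Phi> a x) = \<Phi> a (T1 x - T2 x)" for a x
    using fun_cong[OF c(1), of a x] fun_cong[OF c(2), of a x] by (simp add: clinear_diff[OF Phi_clinear])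
  moreover have "Vs i (T1 (V j \<xi>) - T2 (V j \<xi>)) = 0" if "i < n" "j < n" for i j \<xi>
    using compress_eq_imp[OF assms(3) that, of \<xi>] that by (simp add: clinear_diff[OF Vs_cl])
  ultimately show ?thesis by (simp add: good_def)
qed

lemma good_sa:
  assumes g: "good T0" and nz: "T0 x0 \<noteq> 0"
  shows "\<exists>A x1. good A \<and> is_adj A A \<and> A x1 \<noteq> 0"
proof -
  have Tb: "bounded_clinear T0" and comm: "\<And>a x. T0 (\<Phi> a x) = \<Phi> a (T0 x)"
    and vs: "\<And>i j \<xi>. i < n \<Longrightarrow> j < n \<Longrightarrow> Vs i (T0 (V j \<xi>)) = 0"
    using g by (auto simp: good_def)
  define Ts where "Ts = cadjoint T0"
  have adj: "is_adj T0 Ts" unfolding Ts_def by (rule adj_exists[OF Tb])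
  have adj': "is_adj Ts T0" by (rule is_adj_sym[OF adj])
  have Tsb: "bounded_clinear Ts" unfolding Ts_def by (rule cadjoint_bounded[OF Tb])
  have comms: "Ts (\<Phi> a x) = \<Phi> a (Ts x)" for a x
  proof (rule cinner_ext_left)
    fix z
    have "cinner (Ts (\<Phi> a x)) z = cinner (\<Phi> a x) (T0 z)" by (rule is_adjD[OF adj'])
    also have "\<dots> = cinner x (\<Phi> (astar a) (T0 z))" by (rule Phi_adjD)
    also have "\<dots> = cinner x (T0 (\<Phi> (astar a) z))" by (simp add: comm)
    also have "\<dots> = cinner (Ts x) (\<Phi> (astar a) z)" by (simp add: is_adjD[OF adj'])
    also have "\<dots> = cinner (\<Phi> a (Ts x)) z" by (simp add: Phi_adjD)
    finally show "cinner (Ts (\<Phi> a x)) z = cinner (\<Phi> a (Ts x)) z" .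
  qed
  have vss: "Vs i (Ts (V j \<xi>)) = 0" if ij: "i < n" "j < n" for i j \<xi>
  proof (rule cinner_ext_left)
    fix z
    have "cinner (Vs i (Ts (V j \<xi>))) z = cinner (Ts (V j \<xi>)) (V i z)" by (rule V_adjD2[OF ij(1)])
    also have "\<dots> = cinner (V j \<xi>) (T0 (V i z))" by (rule is_adjD[OF adj'])
    also have "\<dots> = cnj (cinner (T0 (V i z)) (V j \<xi>))" by (rule cinner_cnj)
    also have "cinner (T0 (V i z)) (V j \<xi>) = cinner (Vs j (T0 (V i z))) \<xi>" by (simp add: V_adjD2[OF ij(2)])
    also have "\<dots> = 0" using vs ij by simp
    finally show "cinner (Vs i (Ts (V j \<xi>))) z = cinner 0 z" by simp
  qed
  define A1 where "A1 x = T0 x + Ts x" for x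
  define A2 where "A2 x = \<i> *\<^sub>C (T0 x - Ts x)" for x
  have g1: "good A1" unfolding good_def A1_def
    using bounded_clinear_add[OF Tb Tsb] comm comms vs vss
    by (simp add: clinear_add[OF Phi_clinear] clinear_add[OF Vs_cl])
  have g2: "good A2" unfolding good_def A2_def
    using bounded_clinear_scaleC[OF bounded_clinear_sub[OF Tb Tsb], of \<i>] comm comms vs vss
    by (simp add: clinear_diff[OF Phi_clinear] clinear_scaleC[OF Phi_clinear] clinear_diff[OF Vs_cl] clinear_scaleC[OF Vs_cl])
  have s1: "is_adj A1 A1" unfolding is_adj_def A1_def
    by (simp add: cinner_add_left cinner_add_right is_adjD[OF adj] is_adjD[OF adj'] add.commute)
  have s2: "is_adj A2 A2" unfolding is_adj_def A2_def
    by (simp add: cinner_scaleC_left cinner_scaleC_right cinner_diff_left cinner_diff_right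
        is_adjD[OF adj] is_adjD[OF adj'] algebra_simps)
  have "A1 x0 \<noteq> 0 \<or> A2 x0 \<noteq> 0"
  proof (rule ccontr)
    assume "\<not> (A1 x0 \<noteq> 0 \<or> A2 x0 \<noteq> 0)"
    then have h1: "T0 x0 + Ts x0 = 0" and h2: "\<i> *\<^sub>C (T0 x0 - Ts x0) = 0" by (auto simp: A1_def A2_def)
    have "(- \<i>) *\<^sub>C (\<i> *\<^sub>C (T0 x0 - Ts x0)) = 0" using h2 by simp
    then have "T0 x0 - Ts x0 = 0" by (simp add: scaleC_scaleC scaleC_one)
    then have "T0 x0 + T0 x0 = 0" using h1 by simp
    then have "(1/2) *\<^sub>C (T0 x0 + T0 x0) = 0" by simp
    then have "T0 x0 = 0" using scaleC_add_left[of "1/2" "1/2" "T0 x0"] by (simp add: scaleC_add_right scaleC_one)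
    then show False using nz by simp
  qed
  then show ?thesis using g1 g2 s1 s2 by blast
qed

lemma extreme_imp_inj:
  assumes ext: "is_extreme_point (CPn_I S n) \<rho>"
  shows "inj_on (\<lambda>T. P \<circ> T \<circ> P) (commutant \<Phi>)"
proof (rule ccontr)
  assume "\<not> inj_on (\<lambda>T. P \<circ> T \<circ> P) (commutant \<Phi>)"
  then obtain T1 T2 where T: "T1 \<in> commutant \<Phi>" "T2 \<in> commutant \<Phi>" "P \<circ> T1 \<circ> P = P \<circ> T2 \<circ> P" "T1 \<noteq> T2"
    unfolding inj_on_def by blast
  then obtain x0 where "T1 x0 \<noteq> T2 x0" by (auto simp: fun_eq_iff)
  then have nz: "(\<lambda>x. T1 x - T2 x) x0 \<noteq> 0" by simp
  obtain A x1 where A: "good A" "is_adj A A" "A x1 \<noteq> 0"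
    using good_sa[OF good_diff[OF T(1-3)] nz] by blast
  have Ab: "bounded_clinear A" using A(1) by (simp add: good_def)
  obtain K0 where K0: "\<And>y. norm (A y) \<le> norm y * K0" using Ab by (auto simp: bounded_clinear_def)
  define K where "K = max 0 K0"
  have K: "norm (A y) \<le> norm y * K" for y
    using K0[of y] mult_left_mono[of K0 K "norm y"] by (simp add: K_def)
  have Kp: "0 \<le> K" by (simp add: K_def)
  define e where "e = 1 / (K + 1)"
  have e0: "e > 0" using Kp by (simp add: e_def)
  have eK: "\<bar>e\<bar> * K \<le> 1" "\<bar>-e\<bar> * K \<le> 1" using Kp e0 by (simp_all add: e_def field_simps)
  have in1: "th e A \<in> CPn_I S n" by (rule th_in[OF A(1,2) K eK(1)])
  have in2: "th (-e) A \<in> CPn_I S n" by (rule th_in[OF A(1,2) K eK(2)])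
  have all: "\<forall>\<theta> \<theta>' t. \<theta> \<in> CPn_I S n \<and> \<theta>' \<in> CPn_I S n \<and> 0 < t \<and> t < 1 \<and>
        \<rho> = (\<lambda>i j a x. t *\<^sub>R \<theta> i j a x + (1 - t) *\<^sub>R \<theta>' i j a x) \<longrightarrow> \<theta> = \<rho> \<and> \<theta>' = \<rho>"
    using ext unfolding is_extreme_point_def by blast
  have prem: "th e A \<in> CPn_I S n \<and> th (-e) A \<in> CPn_I S n \<and> 0 < (1/2::real) \<and> (1/2::real) < 1 \<and>
        \<rho> = (\<lambda>i j a x. (1/2) *\<^sub>R th e A i j a x + (1 - 1/2) *\<^sub>R th (-e) A i j a x)"
    by (intro conjI in1 in2 th_avg) simp_all
  have "th e A = \<rho>" using all[rule_format, OF prem] by (rule conjunct1)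
  then show False using th_neq[OF A(1,2) _ A(3)] e0 by simp
qed

end

lemma cinner_sum_list_left: "cinner (sum_list (map f xs)) y = sum_list (map (\<lambda>x. cinner (f x) y) xs)"
  by (induction xs) (simp_all add: cinner_add_left)
lemma cinner_sum_list_right: "cinner y (sum_list (map f xs)) = sum_list (map (\<lambda>x. cinner y (f x)) xs)"
  by (induction xs) (simp_all add: cinner_add_right)
lemma clinear_sum_list: "clinear g \<Longrightarrow> g (sum_list (map f xs)) = sum_list (map (\<lambda>x. g (f x)) xs)"
  by (induction xs) (simp_all add: clinear_add clinear_zero)
lemma scaleC_sum_list: "c *\<^sub>C sum_list (map f xs) = sum_list (map (\<lambda>x. c *\<^sub>C f x) xs)"
  by (induction xs) (simp_all add: scaleC_add_right)
lemma sum_list_map_sum_nth: "sum_list (map f xs) = (\<Sum>k<length xs. f (xs ! k))"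
  by (simp add: sum_list_sum_nth atLeast0LessThan)

lemma cspan_subset_closed:
  assumes "0 \<in> D" "\<And>x y. x \<in> D \<Longrightarrow> y \<in> D \<Longrightarrow> x + y \<in> D" "\<And>c x. x \<in> D \<Longrightarrow> c *\<^sub>C x \<in> D" "G \<subseteq> D"
  shows "cspan G \<subseteq> D"
proof
  fix x assume "x \<in> cspan G"
  then obtain F c where F: "finite F" "F \<subseteq> G" "x = (\<Sum>v\<in>F. c v *\<^sub>C v)" by (auto simp: cspan_def)
  have "(\<Sum>v\<in>F. c v *\<^sub>C v) \<in> D" using F(1,2)
  proof (induction F rule: finite_induct)
    case empty then show ?case using assms(1) by simp
  next
    case (insert v F) then show ?case using assms by auto
  qed
  then show "x \<in> D" using F(3) by simp
qed

context stine begin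

definition gen :: "'a \<times> nat \<times> 'h \<Rightarrow> 'k" where "gen t = \<Phi> (fst t) (V (fst (snd t)) (snd (snd t)))"
definition emb :: "('a \<times> nat \<times> 'h) list \<Rightarrow> 'k" where "emb u = sum_list (map gen u)"
definition valid :: "('a \<times> nat \<times> 'h) list \<Rightarrow> bool" where "valid u \<longleftrightarrow> (\<forall>t\<in>set u. fst (snd t) < n)"
definition tm :: "(nat \<Rightarrow> nat \<Rightarrow> 'a \<Rightarrow> 'h \<Rightarrow> 'h) \<Rightarrow> 'a \<times> nat \<times> 'h \<Rightarrow> 'a \<times> nat \<times> 'h \<Rightarrow> complex" where
  "tm \<theta> s t = cinner (\<theta> (fst (snd s)) (fst (snd t)) (astar (fst s) * fst t) (snd (snd t))) (snd (snd s))"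
definition FF where "FF \<theta> u w = sum_list (map (\<lambda>s. sum_list (map (\<lambda>t. tm \<theta> s t) u)) w)"
definition scl :: "complex \<Rightarrow> ('a \<times> nat \<times> 'h) list \<Rightarrow> ('a \<times> nat \<times> 'h) list" where
  "scl c u = map (\<lambda>t. (c *\<^sub>C fst t, snd t)) u"
definition act :: "'a \<Rightarrow> ('a \<times> nat \<times> 'h) list \<Rightarrow> ('a \<times> nat \<times> 'h) list" where
  "act b u = map (\<lambda>t. (b * fst t, snd t)) u"

lemma valid_append[simp]: "valid (u @ w) \<longleftrightarrow> valid u \<and> valid w" by (auto simp: valid_def)
lemma valid_scl[simp]: "valid (scl c u) \<longleftrightarrow> valid u" by (auto simp: valid_def scl_def)
lemma valid_act[simp]: "valid (act b u) \<longleftrightarrow> valid u" by (auto simp: valid_def act_def)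

lemma emb_append: "emb (u @ w) = emb u + emb w" by (simp add: emb_def)
lemma emb_scl: "emb (scl c u) = c *\<^sub>C emb u"
  by (simp add: emb_def scl_def gen_def Phi_sc scaleC_sum_list comp_def)
lemma emb_act: "emb (act b u) = \<Phi> b (emb u)"
  by (simp add: emb_def act_def gen_def Phi_mult clinear_sum_list[OF Phi_clinear] comp_def)
lemma emb_single: "emb [(a, i, \<xi>)] = \<Phi> a (V i \<xi>)" by (simp add: emb_def gen_def)

lemma FF_append_left: "FF \<theta> (u @ u') w = FF \<theta> u w + FF \<theta> u' w"
  by (simp add: FF_def sum_list_addf)
lemma FF_append_right: "FF \<theta> u (w @ w') = FF \<theta> u w + FF \<theta> u w'"
  by (simp add: FF_def)

lemma CP_cont: "\<theta> \<in> CPn_I S n \<Longrightarrow> i < n \<Longrightarrow> j < n \<Longrightarrow> continuous_op_map S (\<theta> i j)"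
  by (simp add: CPn_I_def completely_n_positive_def)
lemma CP_add: "\<theta> \<in> CPn_I S n \<Longrightarrow> i < n \<Longrightarrow> j < n \<Longrightarrow> \<theta> i j (a + b) x = \<theta> i j a x + \<theta> i j b x"
proof -
  assume a: "\<theta> \<in> CPn_I S n" "i < n" "j < n"
  have "\<theta> i j (a + b) = (\<lambda>x. \<theta> i j a x + \<theta> i j b x)" using CP_cont[OF a] by (simp add: continuous_op_map_def)
  then show ?thesis by simp
qed
lemma CP_sc: "\<theta> \<in> CPn_I S n \<Longrightarrow> i < n \<Longrightarrow> j < n \<Longrightarrow> \<theta> i j (c *\<^sub>C a) x = c *\<^sub>C \<theta> i j a x"
proof -
  assume a: "\<theta> \<in> CPn_I S n" "i < n" "j < n"
  have "\<theta> i j (c *\<^sub>C a) = (\<lambda>x. c *\<^sub>C \<theta> i j a x)" using CP_cont[OF a] by (simp add: continuous_op_map_def)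
  then show ?thesis by simp
qed
lemma CP_zero: "\<theta> \<in> CPn_I S n \<Longrightarrow> i < n \<Longrightarrow> j < n \<Longrightarrow> \<theta> i j 0 x = 0"
  using CP_sc[of \<theta> i j 0 0 x] by simp
lemma CP_pos: "\<theta> \<in> CPn_I S n \<Longrightarrow> pos_matrix ({..<(m::nat)} \<times> {..<n}) X \<Longrightarrow>
    pos_op_matrix ({..<m} \<times> {..<n}) (\<lambda>p q. \<theta> (snd p) (snd q) (X p q))"
  by (simp add: CPn_I_def completely_n_positive_def)
lemma CP_diag: "\<theta> \<in> CPn_I S n \<Longrightarrow> i < n \<Longrightarrow> \<theta> i i 1 = id" by (simp add: CPn_I_def)
lemma CP_up: "\<theta> \<in> CPn_I S n \<Longrightarrow> i < j \<Longrightarrow> j < n \<Longrightarrow> \<theta> i j 1 = (\<lambda>x. 0)" by (simp add: CPn_I_def)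
lemma CP_out: "\<theta> \<in> CPn_I S n \<Longrightarrow> n \<le> i \<or> n \<le> j \<Longrightarrow> \<theta> i j = (\<lambda>a x. 0)"
proof -
  assume a: "\<theta> \<in> CPn_I S n" "n \<le> i \<or> n \<le> j"
  have "\<forall>i j. (n \<le> i \<or> n \<le> j) \<longrightarrow> \<theta> i j = (\<lambda>a x. 0)" using a(1) unfolding CPn_I_def by blast
  then show ?thesis using a(2) by blast
qed

lemma FF_scl_left:
  assumes th: "\<theta> \<in> CPn_I S n" and v: "valid u" "valid w"
  shows "FF \<theta> (scl c u) w = c * FF \<theta> u w"
proof -
  have "FF \<theta> (scl c u) w = sum_list (map (\<lambda>s. sum_list (map (\<lambda>t. c * tm \<theta> s t) u)) w)"
    unfolding FF_def scl_def map_map comp_def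
  proof (intro arg_cong[where f=sum_list] map_cong refl)
    fix s t assume "s \<in> set w" "t \<in> set u"
    then have "fst (snd s) < n" "fst (snd t) < n" using v by (auto simp: valid_def)
    then show "tm \<theta> s (c *\<^sub>C fst t, snd t) = c * tm \<theta> s t"
      by (simp add: tm_def scaleC_mult_right CP_sc[OF th] cinner_scaleC_left)
  qed
  also have "\<dots> = c * FF \<theta> u w" by (simp add: FF_def sum_list_const_mult)
  finally show ?thesis .
qed

lemma FF_scl_right:
  assumes th: "\<theta> \<in> CPn_I S n" and v: "valid u" "valid w"
  shows "FF \<theta> u (scl c w) = cnj c * FF \<theta> u w"
proof -
  have "FF \<theta> u (scl c w) = sum_list (map (\<lambda>s. cnj c * sum_list (map (\<lambda>t. tm \<theta> s t) u)) w)"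
    unfolding FF_def scl_def map_map comp_def
  proof (intro arg_cong[where f=sum_list] map_cong refl)
    fix s assume s: "s \<in> set w"
    have "sum_list (map (\<lambda>t. tm \<theta> (c *\<^sub>C fst s, snd s) t) u) = sum_list (map (\<lambda>t. cnj c * tm \<theta> s t) u)"
    proof (intro arg_cong[where f=sum_list] map_cong refl)
      fix t assume "t \<in> set u"
      then have "fst (snd s) < n" "fst (snd t) < n" using v s by (auto simp: valid_def)
      then show "tm \<theta> (c *\<^sub>C fst s, snd s) t = cnj c * tm \<theta> s t"
        by (simp add: tm_def astar_scaleC scaleC_mult_left CP_sc[OF th] cinner_scaleC_left)
    qed
    then show "sum_list (map (\<lambda>t. tm \<theta> (c *\<^sub>C fst s, snd s) t) u) = cnj c * sum_list (map (\<lambda>t. tm \<theta> s t) u)"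
      by (simp add: sum_list_const_mult)
  qed
  also have "\<dots> = cnj c * FF \<theta> u w" by (simp add: FF_def sum_list_const_mult)
  finally show ?thesis .
qed

lemma FF_act: "FF \<theta> (act b u) w = FF \<theta> u (act (astar b) w)"
  unfolding FF_def act_def map_map comp_def tm_def
  by (simp add: astar_mult astar_astar mult.assoc)

lemma FF_rho: "valid u \<Longrightarrow> valid w \<Longrightarrow> FF \<rho> u w = cinner (emb u) (emb w)"
proof -
  assume v: "valid u" "valid w"
  have "cinner (emb u) (emb w) = sum_list (map (\<lambda>s. sum_list (map (\<lambda>t. cinner (gen t) (gen s)) u)) w)"
    by (simp add: emb_def cinner_sum_list_left cinner_sum_list_right)
  also have "\<dots> = FF \<rho> u w"
    unfolding FF_def
  proof (intro arg_cong[where f=sum_list] map_cong refl)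
    fix s t assume "s \<in> set w" "t \<in> set u"
    then have ij: "fst (snd s) < n" "fst (snd t) < n" using v by (auto simp: valid_def)
    show "cinner (gen t) (gen s) = tm \<rho> s t"
      unfolding tm_def gen_def using ij
      by (simp add: rhoVs V_adjD2 Phi_mult Phi_adjD astar_astar)
  qed
  finally show ?thesis by simp
qed

lemma FF_decomp:
  assumes "\<rho> = (\<lambda>i j a x. t *\<^sub>R \<theta> i j a x + (1 - t) *\<^sub>R \<theta>' i j a x)"
  shows "FF \<rho> u w = complex_of_real t * FF \<theta> u w + complex_of_real (1 - t) * FF \<theta>' u w"
proof -
  have "tm \<rho> s r = complex_of_real t * tm \<theta> s r + complex_of_real (1 - t) * tm \<theta>' s r" for s r
    unfolding tm_def by (subst assms) (simp add: cinner_add_left cinner_scaleR_left)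
  then show ?thesis by (simp add: FF_def sum_list_addf sum_list_const_mult)
qed

lemma sum_prod_delta:
  fixes h :: "nat \<Rightarrow> 'b::comm_monoid_add"
  assumes "\<And>k. k < m \<Longrightarrow> ix k < (n'::nat)"
  shows "(\<Sum>p\<in>{..<m} \<times> {..<n'}. if snd p = ix (fst p) then h (fst p) else 0) = (\<Sum>k<m. h k)"
proof -
  have "(\<Sum>p\<in>{..<m} \<times> {..<n'}. if snd p = ix (fst p) then h (fst p) else 0)
      = (\<Sum>k<m. \<Sum>i<n'. if i = ix k then h k else 0)"
    by (simp only: sum.cartesian_product' fst_conv snd_conv)
  also have "\<dots> = (\<Sum>k<m. h k)"
    by (rule sum.cong[OF refl]) (use assms in \<open>simp add: sum.delta'\<close>)
  finally show ?thesis .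
qed

lemma FF_pos:
  assumes th: "\<theta> \<in> CPn_I S n" and v: "valid u"
  shows "Im (FF \<theta> u u) = 0 \<and> 0 \<le> Re (FF \<theta> u u)"
proof -
  define m where "m = length u"
  define al where "al k = fst (u ! k)" for k
  define ix where "ix k = fst (snd (u ! k))" for k
  define xs where "xs k = snd (snd (u ! k))" for k
  have ixn: "ix k < n" if "k < m" for k using v that by (auto simp: valid_def ix_def m_def)
  define I where "I = {..<m} \<times> {..<n}"
  define \<beta> where "\<beta> q = (if snd q = ix (fst q) then al (fst q) else 0)" for q :: "nat \<times> nat"
  define Bm where "Bm l q = (if l = (0::nat,0::nat) then \<beta> q else 0)" for l q :: "nat \<times> nat"
  define X where "X p q = (\<Sum>l\<in>I. astar (Bm l p) * Bm l q)" for p q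
  define \<xi> where "\<xi> p = (if snd p = ix (fst p) then xs (fst p) else 0)" for p :: "nat \<times> nat"
  define t where "t k l = cinner (\<theta> (ix k) (ix l) (astar (al k) * al l) (xs l)) (xs k)" for k l
  show ?thesis
  proof (cases "u = []")
    case True then show ?thesis by (simp add: FF_def)
  next
    case False
    then have m0: "0 < m" by (simp add: m_def)
    then have n0: "0 < n" using ixn by fastforce
    have pm: "pos_matrix I X" unfolding pos_matrix_def X_def by blast
    have po: "pos_op_matrix I (\<lambda>p q. \<theta> (snd p) (snd q) (X p q))"
      using CP_pos[OF th, of m X] pm by (simp add: I_def)
    define s where "s = (\<Sum>p\<in>I. \<Sum>q\<in>I. cinner (\<theta> (snd p) (snd q) (X p q) (\<xi> q)) (\<xi> p))"
    have s: "Im s = 0 \<and> 0 \<le> Re s" using po unfolding pos_op_matrix_def Let_def s_def by blast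
    have Xeq: "X p q = astar (\<beta> p) * \<beta> q" for p q
    proof -
      have "X p q = (\<Sum>l\<in>I. if l = (0,0) then astar (\<beta> p) * \<beta> q else 0)"
        unfolding X_def by (rule sum.cong) (auto simp: Bm_def astar_zero)
      also have "\<dots> = astar (\<beta> p) * \<beta> q" using m0 n0 by (simp add: I_def sum.delta')
      finally show ?thesis .
    qed
    have trm: "cinner (\<theta> (snd p) (snd q) (X p q) (\<xi> q)) (\<xi> p) =
        (if snd p = ix (fst p) then (if snd q = ix (fst q) then t (fst p) (fst q) else 0) else 0)"
      if pq: "p \<in> I" "q \<in> I" for p q
    proof -
      have lt: "snd p < n" "snd q < n" using pq by (auto simp: I_def)
      show ?thesis
        using lt by (auto simp: Xeq \<beta>_def \<xi>_def t_def CP_zero[OF th])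
    qed
    have "s = (\<Sum>p\<in>I. if snd p = ix (fst p) then
                 (\<Sum>q\<in>I. if snd q = ix (fst q) then t (fst p) (fst q) else 0) else 0)"
      unfolding s_def by (rule sum.cong[OF refl]) (simp add: trm)
    also have "\<dots> = (\<Sum>p\<in>I. if snd p = ix (fst p) then (\<Sum>l<m. t (fst p) l) else 0)"
      unfolding I_def
    proof (rule sum.cong[OF refl])
      fix p :: "nat \<times> nat"
      have "(\<Sum>q\<in>{..<m} \<times> {..<n}. if snd q = ix (fst q) then t (fst p) (fst q) else 0) = (\<Sum>l<m. t (fst p) l)"
        by (rule sum_prod_delta[OF ixn])
      then show "(if snd p = ix (fst p) then \<Sum>q\<in>{..<m} \<times> {..<n}. if snd q = ix (fst q) then t (fst p) (fst q) else 0 else 0) =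
          (if snd p = ix (fst p) then \<Sum>l<m. t (fst p) l else 0)" by simp
    qed
    also have "\<dots> = (\<Sum>k<m. \<Sum>l<m. t k l)"
      unfolding I_def by (rule sum_prod_delta[OF ixn])
    also have "\<dots> = FF \<theta> u u"
      by (simp add: FF_def sum_list_map_sum_nth m_def t_def tm_def al_def ix_def xs_def)
    finally show ?thesis using s by simp
  qed
qed

end

lemma cs_real:
  fixes A B C :: real
  assumes h: "\<And>r. 0 \<le> A - 2 * r * B + r\<^sup>2 * B * C" and B: "0 \<le> B" and C: "0 \<le> C"
  shows "B \<le> A * C"
proof (cases "C = 0")
  case True
  show ?thesis
  proof (rule ccontr)
    assume "\<not> B \<le> A * C"
    then have Bp: "B > 0" using True by simp
    have "0 \<le> A - 2 * ((A + 1) / (2 * B)) * B" using h[of "(A + 1) / (2 * B)"] True by simp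
    also have "\<dots> = -1" using Bp by (simp add: field_simps)
    finally show False by simp
  qed
next
  case False
  then have Cp: "C > 0" using C by simp
  have "0 \<le> A - 2 * (1 / C) * B + (1 / C)\<^sup>2 * B * C" by (rule h)
  also have "\<dots> = A - B / C" using Cp by (simp add: field_simps power2_eq_square)
  finally have "B / C \<le> A" by simp
  then show ?thesis using Cp by (simp add: divide_le_eq mult.commute)
qed

context stine begin

lemma FF_herm:
  assumes th: "\<theta> \<in> CPn_I S n" and v: "valid u" "valid w"
  shows "FF \<theta> w u = cnj (FF \<theta> u w)"
proof -
  have p1: "Im (FF \<theta> (u @ w) (u @ w)) = 0" using FF_pos[OF th] v by simp
  have p2: "Im (FF \<theta> (u @ scl \<i> w) (u @ scl \<i> w)) = 0" using FF_pos[OF th] v by simp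
  have pu: "Im (FF \<theta> u u) = 0" and pw: "Im (FF \<theta> w w) = 0" using FF_pos[OF th] v by auto
  have e1: "FF \<theta> (u @ w) (u @ w) = FF \<theta> u u + FF \<theta> w u + (FF \<theta> u w + FF \<theta> w w)"
    by (simp add: FF_append_left FF_append_right)
  have e2: "FF \<theta> (u @ scl \<i> w) (u @ scl \<i> w) = FF \<theta> u u + \<i> * FF \<theta> w u + (- \<i> * FF \<theta> u w + FF \<theta> w w)"
    using v by (simp add: FF_append_left FF_append_right FF_scl_left[OF th] FF_scl_right[OF th])
  have a: "Im (FF \<theta> w u) + Im (FF \<theta> u w) = 0" using p1 pu pw unfolding e1 by simp
  have b: "Re (FF \<theta> w u) - Re (FF \<theta> u w) = 0" using p2 pu pw unfolding e2 by simp
  show ?thesis using a b by (simp add: complex_eq_iff)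
qed

lemma FF_cs:
  assumes th: "\<theta> \<in> CPn_I S n" and v: "valid u" "valid w"
  shows "(cmod (FF \<theta> u w))\<^sup>2 \<le> Re (FF \<theta> u u) * Re (FF \<theta> w w)"
proof -
  define \<beta> where "\<beta> = FF \<theta> u w"
  have wu: "FF \<theta> w u = cnj \<beta>" unfolding \<beta>_def by (rule FF_herm[OF th v])
  have bb: "\<beta> * cnj \<beta> = complex_of_real ((cmod \<beta>)\<^sup>2)" by (rule complex_norm_square[symmetric])
  have h: "0 \<le> Re (FF \<theta> u u) - 2 * r * (cmod \<beta>)\<^sup>2 + r\<^sup>2 * (cmod \<beta>)\<^sup>2 * Re (FF \<theta> w w)" for r
  proof -
    define l where "l = - (complex_of_real r * \<beta>)"
    have "0 \<le> Re (FF \<theta> (u @ scl l w) (u @ scl l w))" using FF_pos[OF th] v by simp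
    also have "FF \<theta> (u @ scl l w) (u @ scl l w) = FF \<theta> u u + l * FF \<theta> w u + (cnj l * FF \<theta> u w + l * cnj l * FF \<theta> w w)"
      using v by (simp add: FF_append_left FF_append_right FF_scl_left[OF th] FF_scl_right[OF th] mult.assoc)
    also have "\<dots> = FF \<theta> u u - 2 * complex_of_real r * (\<beta> * cnj \<beta>) + complex_of_real r * complex_of_real r * (\<beta> * cnj \<beta>) * FF \<theta> w w"
      unfolding l_def wu \<beta>_def[symmetric] by (simp add: algebra_simps)
    also have "\<dots> = FF \<theta> u u - complex_of_real (2 * r * (cmod \<beta>)\<^sup>2) + complex_of_real (r\<^sup>2 * (cmod \<beta>)\<^sup>2) * FF \<theta> w w"
      unfolding bb by (simp add: power2_eq_square)
    finally show ?thesis by simp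
  qed
  have "(cmod \<beta>)\<^sup>2 \<le> Re (FF \<theta> u u) * Re (FF \<theta> w w)"
    by (rule cs_real[OF h]) (use FF_pos[OF th] v in auto)
  then show ?thesis by (simp add: \<beta>_def)
qed

end

context stine begin

lemma inj_imp_eq:
  assumes inj: "inj_on (\<lambda>T. P \<circ> T \<circ> P) (commutant \<Phi>)"
    and th: "\<theta> \<in> CPn_I S n" and th': "\<theta>' \<in> CPn_I S n" and t: "0 < t" "t < 1"
    and dec: "\<rho> = (\<lambda>i j a x. t *\<^sub>R \<theta> i j a x + (1 - t) *\<^sub>R \<theta>' i j a x)"
  shows "\<theta> = \<rho>"
proof -
  have Fbound: "t * Re (FF \<theta> u u) \<le> (norm (emb u))\<^sup>2" if v: "valid u" for u
  proof -
    have "complex_of_real ((norm (emb u))\<^sup>2) = complex_of_real t * FF \<theta> u u + complex_of_real (1 - t) * FF \<theta>' u u"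
      using FF_decomp[OF dec, of u u] FF_rho[OF v v] by (simp add: cinner_self_eq)
    then have "Re (complex_of_real ((norm (emb u))\<^sup>2)) = Re (complex_of_real t * FF \<theta> u u + complex_of_real (1 - t) * FF \<theta>' u u)"
      by (rule arg_cong)
    then have "(norm (emb u))\<^sup>2 = t * Re (FF \<theta> u u) + (1 - t) * Re (FF \<theta>' u u)" by simp
    moreover have "0 \<le> (1 - t) * Re (FF \<theta>' u u)" using FF_pos[OF th' v] t by simp
    ultimately show ?thesis by simp
  qed
  have Fre: "Re (FF \<theta> u u) \<le> (norm (emb u))\<^sup>2 / t" "0 \<le> Re (FF \<theta> u u)" if v: "valid u" for u
    using Fbound[OF v] t FF_pos[OF th v] by (simp_all add: field_simps)
  have Fcmod: "cmod (FF \<theta> u w) \<le> (1/t) * norm (emb u) * norm (emb w)" if v: "valid u" "valid w" for u w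
  proof -
    have "(cmod (FF \<theta> u w))\<^sup>2 \<le> Re (FF \<theta> u u) * Re (FF \<theta> w w)" by (rule FF_cs[OF th v])
    also have "\<dots> \<le> ((norm (emb u))\<^sup>2 / t) * ((norm (emb w))\<^sup>2 / t)"
      by (rule mult_mono) (use Fre[OF v(1)] Fre[OF v(2)] t in auto)
    also have "\<dots> = ((1/t) * norm (emb u) * norm (emb w))\<^sup>2" by (simp add: power2_eq_square field_simps)
    finally show ?thesis by (rule power2_le_imp_le) (use t in simp)
  qed
  have Fwd1: "FF \<theta> u w = FF \<theta> u' w" if v: "valid u" "valid u'" "valid w" and e: "emb u = emb u'" for u u' w
  proof -
    have "emb (u @ scl (-1) u') = 0" using e by (simp add: emb_append emb_scl scaleC_minus_left scaleC_one)
    then have "cmod (FF \<theta> (u @ scl (-1) u') w) \<le> 0" using Fcmod[of "u @ scl (-1) u'" w] v by simp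
    then have "FF \<theta> (u @ scl (-1) u') w = 0" by simp
    then show ?thesis using v by (simp add: FF_append_left FF_scl_left[OF th])
  qed
  have Fwd2: "FF \<theta> u w = FF \<theta> u w'" if v: "valid u" "valid w" "valid w'" and e: "emb w = emb w'" for u w w'
    using FF_herm[OF th v(1) v(2)] FF_herm[OF th v(1) v(3)] Fwd1[OF v(2) v(3) v(1) e] by simp
  define D where "D = {emb u | u. valid u}"
  define rep where "rep x = (SOME u. valid u \<and> emb u = x)" for x
  have rep: "valid (rep x) \<and> emb (rep x) = x" if "x \<in> D" for x
    unfolding rep_def by (rule someI_ex) (use that in \<open>auto simp: D_def\<close>)
  define B where "B x y = FF \<theta> (rep x) (rep y)" for x y
  have Bemb: "B (emb u) (emb w) = FF \<theta> u w" if v: "valid u" "valid w" for u w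
  proof -
    have r: "valid (rep (emb u)) \<and> emb (rep (emb u)) = emb u" "valid (rep (emb w)) \<and> emb (rep (emb w)) = emb w"
      using rep v by (auto simp: D_def)
    have "B (emb u) (emb w) = FF \<theta> u (rep (emb w))" unfolding B_def using r v by (intro Fwd1) auto
    also have "\<dots> = FF \<theta> u w" using r v by (intro Fwd2) auto
    finally show ?thesis .
  qed
  have Dmem: "\<exists>u. valid u \<and> x = emb u" if "x \<in> D" for x using that by (auto simp: D_def)
  have Dadd: "x + y \<in> D" if xy: "x \<in> D" "y \<in> D" for x y
  proof -
    obtain u where "valid u" "x = emb u" using Dmem[OF xy(1)] by blast
    moreover obtain w where "valid w" "y = emb w" using Dmem[OF xy(2)] by blast
    ultimately have "valid (u @ w) \<and> x + y = emb (u @ w)" by (simp add: emb_append)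
    then show ?thesis unfolding D_def by blast
  qed
  have Dsc: "c *\<^sub>C x \<in> D" if "x \<in> D" for c x
    using Dmem[OF that] by (auto simp: D_def emb_scl[symmetric])
  have Dact: "\<Phi> a x \<in> D" if "x \<in> D" for a x
    using Dmem[OF that] by (auto simp: D_def emb_act[symmetric])
  have D0: "0 \<in> D" unfolding D_def by (rule CollectI, rule exI[of _ "[]"]) (simp add: emb_def valid_def)
  have Dgen: "\<Phi> a (V i \<xi>) \<in> D" if "i < n" for a i \<xi>
    unfolding D_def using that by (intro CollectI exI[of _ "[(a, i, \<xi>)]"]) (simp add: emb_single valid_def)
  have Ddense: "closure D = UNIV"
  proof -
    have "cspan {\<Phi> a (V i \<xi>) | a i \<xi>. i < n} \<subseteq> D"
      by (rule cspan_subset_closed[OF D0 Dadd Dsc]) (auto intro: Dgen)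
    then have "closure (cspan {\<Phi> a (V i \<xi>) | a i \<xi>. i < n}) \<subseteq> closure D" by (rule closure_mono)
    then show ?thesis using dense by auto
  qed
  have "\<exists>T. bounded_clinear T \<and> (\<forall>x\<in>D. \<forall>y\<in>D. cinner (T x) y = B x y)"
  proof (rule form_operator[OF Ddense _ Dadd Dsc])
    show "0 \<le> 1/t" using t by simp
  next
    fix x x' y assume a: "x \<in> D" "x' \<in> D" "y \<in> D"
    obtain u where "valid u" "x = emb u" using Dmem[OF a(1)] by blast
    moreover obtain u' where "valid u'" "x' = emb u'" using Dmem[OF a(2)] by blast
    moreover obtain w where "valid w" "y = emb w" using Dmem[OF a(3)] by blast
    ultimately show "B (x + x') y = B x y + B x' y"
      by (simp add: emb_append[symmetric] Bemb FF_append_left)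
  next
    fix c x y assume a: "x \<in> D" "y \<in> D"
    obtain u where "valid u" "x = emb u" using Dmem[OF a(1)] by blast
    moreover obtain w where "valid w" "y = emb w" using Dmem[OF a(2)] by blast
    ultimately show "B (c *\<^sub>C x) y = c * B x y"
      by (simp add: emb_scl[symmetric] Bemb FF_scl_left[OF th])
  next
    fix x y y' assume a: "x \<in> D" "y \<in> D" "y' \<in> D"
    obtain u where "valid u" "x = emb u" using Dmem[OF a(1)] by blast
    moreover obtain w where "valid w" "y = emb w" using Dmem[OF a(2)] by blast
    moreover obtain w' where "valid w'" "y' = emb w'" using Dmem[OF a(3)] by blast
    ultimately show "B x (y + y') = B x y + B x y'"
      by (simp add: emb_append[symmetric] Bemb FF_append_right)
  next
    fix c x y assume a: "x \<in> D" "y \<in> D"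
    obtain u where "valid u" "x = emb u" using Dmem[OF a(1)] by blast
    moreover obtain w where "valid w" "y = emb w" using Dmem[OF a(2)] by blast
    ultimately show "B x (c *\<^sub>C y) = cnj c * B x y"
      by (simp add: emb_scl[symmetric] Bemb FF_scl_right[OF th])
  next
    fix x y assume a: "x \<in> D" "y \<in> D"
    obtain u where "valid u" "x = emb u" using Dmem[OF a(1)] by blast
    moreover obtain w where "valid w" "y = emb w" using Dmem[OF a(2)] by blast
    ultimately show "cmod (B x y) \<le> 1 / t * norm x * norm y"
      using Fcmod by (simp only: Bemb)
  qed
  then obtain T where Tb: "bounded_clinear T" and TB: "\<And>x y. x \<in> D \<Longrightarrow> y \<in> D \<Longrightarrow> cinner (T x) y = B x y"
    by blast
  have TF: "cinner (T (emb u)) (emb w) = FF \<theta> u w" if "valid u" "valid w" for u w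
    using TB[of "emb u" "emb w"] Bemb[OF that] that by (auto simp: D_def)
  have Tbl: "bounded_linear T" by (rule bounded_clinear_bounded_linear[OF Tb])
  have Tc: "continuous_on UNIV T" by (rule linear_continuous_on[OF Tbl])
  have Tcl: "clinear T" by (rule bounded_clinear_clinear[OF Tb])
  have sa_D: "cinner (T x) y = cinner x (T y)" if xy: "x \<in> D" "y \<in> D" for x y
  proof -
    obtain u where u: "valid u" "x = emb u" using Dmem[OF xy(1)] by blast
    obtain w where w: "valid w" "y = emb w" using Dmem[OF xy(2)] by blast
    have "cinner (T x) y = FF \<theta> u w" using TF u w by simp
    also have "\<dots> = cnj (FF \<theta> w u)" using FF_herm[OF th w(1) u(1)] by simp
    also have "FF \<theta> w u = cinner (T y) x" using TF u w by simp
    also have "cnj (cinner (T y) x) = cinner x (T y)" by (simp add: cinner_cnj[of x "T y"])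
    finally show ?thesis .
  qed
  have c1: "continuous_on UNIV (\<lambda>y. cinner (T x) y)" for x by (rule continuous_cinner_right)
  have c2: "continuous_on UNIV (\<lambda>y. cinner x (T y))" for x
    by (rule continuous_on_compose2[OF continuous_cinner_right Tc]) auto
  have c3: "continuous_on UNIV (\<lambda>x. cinner (T x) y)" for y
    by (rule continuous_on_compose2[OF continuous_cinner_left Tc]) auto
  have c4: "continuous_on UNIV (\<lambda>x. cinner x (T y))" for y by (rule continuous_cinner_left)
  have sa1: "cinner (T x) y = cinner x (T y)" if xD: "x \<in> D" for x y
    by (rule dense_agree[OF c1 c2 Ddense]) (rule sa_D[OF xD])
  have sa: "is_adj T T" unfolding is_adj_def
  proof (intro allI)
    fix x y show "cinner (T x) y = cinner x (T y)"
      by (rule dense_agree[OF c3 c4 Ddense]) (rule sa1)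
  qed
  have comD: "T (\<Phi> a x) = \<Phi> a (T x)" if xD: "x \<in> D" for a x
  proof (rule cinner_dense_unique[OF Ddense])
    fix y assume yD: "y \<in> D"
    obtain u where u: "valid u" "x = emb u" using Dmem[OF xD] by blast
    obtain w where w: "valid w" "y = emb w" using Dmem[OF yD] by blast
    have "cinner (T (\<Phi> a x)) y = FF \<theta> (act a u) w" using TF[of "act a u" w] u w by (simp add: emb_act)
    also have "\<dots> = FF \<theta> u (act (astar a) w)" by (rule FF_act)
    also have "\<dots> = cinner (T x) (\<Phi> (astar a) y)" using TF[of u "act (astar a) w"] u w by (simp add: emb_act)
    also have "\<dots> = cinner (\<Phi> a (T x)) y" by (simp add: Phi_adjD)
    finally show "cinner (T (\<Phi> a x)) y = cinner (\<Phi> a (T x)) y" .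
  qed
  have com: "T (\<Phi> a x) = \<Phi> a (T x)" for a x
  proof (rule cinner_dense_unique[OF Ddense])
    fix y assume yD: "y \<in> D"
    have "cinner (T (\<Phi> a x)) y = cinner x (\<Phi> (astar a) (T y))" by (simp add: is_adjD[OF sa] Phi_adjD)
    also have "\<dots> = cinner x (T (\<Phi> (astar a) y))" by (simp add: comD[OF yD])
    also have "\<dots> = cinner (\<Phi> a (T x)) y" by (simp add: is_adjD[OF sa, symmetric] Phi_adjD)
    finally show "cinner (T (\<Phi> a x)) y = cinner (\<Phi> a (T x)) y" .
  qed
  have Tcomm: "T \<in> commutant \<Phi>" unfolding commutant_def using Tb com by (auto simp: fun_eq_iff)
  have idcomm: "id \<in> commutant \<Phi>" unfolding commutant_def using bounded_clinear_id by auto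
  have thT: "\<theta> i j a \<xi> = Vs i (\<Phi> a (T (V j \<xi>)))" if ij: "i < n" "j < n" for i j a \<xi>
  proof (rule cinner_ext_left)
    fix \<eta>
    have v1: "valid [(a, j, \<xi>)]" "valid [(1, i, \<eta>)]" using ij by (simp_all add: valid_def)
    have "cinner (\<theta> i j a \<xi>) \<eta> = FF \<theta> [(a, j, \<xi>)] [(1, i, \<eta>)]"
      by (simp add: FF_def tm_def astar_one)
    also have "\<dots> = cinner (T (\<Phi> a (V j \<xi>))) (\<Phi> 1 (V i \<eta>))" using TF[OF v1] by (simp add: emb_single)
    also have "\<dots> = cinner (Vs i (\<Phi> a (T (V j \<xi>)))) \<eta>" by (simp add: com Phi_one V_adjD2[OF ij(1)])
    finally show "cinner (\<theta> i j a \<xi>) \<eta> = cinner (Vs i (\<Phi> a (T (V j \<xi>)))) \<eta>" .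
  qed
  have VTV_le: "Vs i (T (V j \<xi>)) = Vs i (V j \<xi>)" if ij: "i < n" "j < n" "i \<le> j" for i j \<xi>
  proof -
    have "Vs i (T (V j \<xi>)) = \<theta> i j 1 \<xi>" using thT[OF ij(1,2)] by (simp add: Phi_one)
    then show ?thesis using ij CP_diag[OF th ij(1)] CP_up[OF th, of i j] VsV[OF ij(1,2)]
      by (cases "i = j") auto
  qed
  have VTV: "Vs i (T (V j \<xi>)) = Vs i (V j \<xi>)" if ij: "i < n" "j < n" for i j \<xi>
  proof (cases "i \<le> j")
    case True then show ?thesis using VTV_le ij by blast
  next
    case False
    have "Vs i (T (V j \<xi>)) = 0"
    proof (rule cinner_ext_left)
      fix z
      have "cinner (Vs i (T (V j \<xi>))) z = cinner (T (V j \<xi>)) (V i z)" by (rule V_adjD2[OF ij(1)])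
      also have "\<dots> = cinner (V j \<xi>) (T (V i z))" by (rule is_adjD[OF sa])
      also have "\<dots> = cnj (cinner (T (V i z)) (V j \<xi>))" by (rule cinner_cnj)
      also have "cinner (T (V i z)) (V j \<xi>) = cinner (Vs j (T (V i z))) \<xi>" by (simp add: V_adjD2[OF ij(2)])
      also have "Vs j (T (V i z)) = Vs j (V i z)" using VTV_le[of j i z] ij False by simp
      also have "\<dots> = 0" using VsV[OF ij(2,1)] False by simp
      finally show "cinner (Vs i (T (V j \<xi>))) z = cinner 0 z" by simp
    qed
    then show ?thesis using VsV[OF ij] False by simp
  qed
  have "P \<circ> T \<circ> P = P \<circ> id \<circ> P" by (rule compress_id[OF Tcl VTV])
  then have Tid: "T = id" using inj Tcomm idcomm by (simp add: inj_on_def)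
  show ?thesis
  proof (intro ext)
    fix i j a x
    show "\<theta> i j a x = \<rho> i j a x"
    proof (cases "i < n \<and> j < n")
      case True then show ?thesis by (simp add: thT Tid rhoVs)
    next
      case False then show ?thesis using CP_out[OF th, of i j] rho_out[of i j] by auto
    qed
  qed
qed

end

theorem theorem4p4:
  fixes S :: "('a::complex_star_algebra \<Rightarrow> real) set"
    and n :: nat
    and \<rho> :: "nat \<Rightarrow> nat \<Rightarrow> 'a \<Rightarrow> ('h::chilbert_space \<Rightarrow> 'h)"
    and \<Phi> :: "'a \<Rightarrow> ('k::chilbert_space \<Rightarrow> 'k)"
    and V :: "nat \<Rightarrow> 'h \<Rightarrow> 'k"
  assumes "pro_cstar_algebra S"
    and "\<rho> \<in> CPn_I S n"
    and "stinespring_rep S n \<rho> \<Phi> V"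
  shows "is_extreme_point (CPn_I S n) \<rho> \<longleftrightarrow>
         inj_on (\<lambda>T. orth_proj (closure (cspan {V i \<xi> | i \<xi>. i < n})) \<circ> T \<circ>
                      orth_proj (closure (cspan {V i \<xi> | i \<xi>. i < n})))
                (commutant \<Phi>)"
proof -
  interpret stine S n \<rho> \<Phi> V using assms(2,3) by unfold_locales
  have Meq: "orth_proj (closure (cspan {V i \<xi> | i \<xi>. i < n})) = P" using orthP by (simp add: M_def)
  show ?thesis unfolding Meq
  proof
    assume ext: "is_extreme_point (CPn_I S n) \<rho>"
    show "inj_on (\<lambda>T. P \<circ> T \<circ> P) (commutant \<Phi>)" by (rule extreme_imp_inj[OF ext])
  next
    assume inj: "inj_on (\<lambda>T. P \<circ> T \<circ> P) (commutant \<Phi>)"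
    show "is_extreme_point (CPn_I S n) \<rho>" unfolding is_extreme_point_def
    proof (rule conjI[OF rhoC], intro allI impI)
      fix \<theta> \<theta>' t
      assume h: "\<theta> \<in> CPn_I S n \<and> \<theta>' \<in> CPn_I S n \<and> 0 < t \<and> t < 1 \<and>
        \<rho> = (\<lambda>i j a x. t *\<^sub>R \<theta> i j a x + (1 - t) *\<^sub>R \<theta>' i j a x)"
      then have th: "\<theta> \<in> CPn_I S n" and th': "\<theta>' \<in> CPn_I S n" and t: "0 < t" "t < 1"
        and dec: "\<rho> = (\<lambda>i j a x. t *\<^sub>R \<theta> i j a x + (1 - t) *\<^sub>R \<theta>' i j a x)" by auto
      have dec': "\<rho> = (\<lambda>i j a x. (1 - t) *\<^sub>R \<theta>' i j a x + (1 - (1 - t)) *\<^sub>R \<theta> i j a x)"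
        unfolding dec by (simp add: add.commute)
      have "\<theta> = \<rho>" by (rule inj_imp_eq[OF inj th th' t dec])
      moreover have "\<theta>' = \<rho>" by (rule inj_imp_eq[OF inj th' th _ _ dec']) (use t in simp_all)
      ultimately show "\<theta> = \<rho> \<and> \<theta>' = \<rho>" by simp
    qed
  qed
qed


end
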